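(* Let $\{x^k\}_k$, $\{z^k\}_k$ be generated by the normal map-based stochastic proximal gradient method described in the context and suppose (A.3) and (A.4) hold. Define $\xi(\omega):=1/(2+2\lambda^2L(\omega)^2)$ for $\omega$ with $L(\omega)<\infty$ and $\xi(\omega):=0$ otherwise. Then for every $\omega$ with $L(\omega)<\infty$ there exists $\bar T(\omega)>0$ such that for every time window $T\in(0,\bar T(\omega)]$, with associated time indices $\{m_k\}_k$ and aggregated errors $\{s_k\}_k$, there is $K_0\in\mathbb N$ such that \[ H_{\xi(\omega)}(z^{m_{k+1}}(\omega))-H_{\xi(\omega)}(z^{m_k}(\omega))\le-\frac{\xi(\omega)T}{5}\|F^\lambda_{\mathrm{nor}}(z^{m_k}(\omega))\|^2+\frac5T s_k(\omega)^2\qquad\forall\,k\ge K_0. \]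
   Context: Let $\varphi:\mathbb{R}^d\to(-\infty,\infty]$ be convex, lower semicontinuous and proper, let $f:\mathbb{R}^d\to\mathbb{R}$ be continuously differentiable on an open set containing $\mathrm{dom}\,\varphi$, and set $\psi=f+\varphi$. For $\lambda>0$ let $\mathrm{prox}_{\lambda\varphi}(x)=\operatorname{argmin}_y\{\varphi(y)+\frac{1}{2\lambda}\|x-y\|^2\}$, $\mathrm{env}_{\lambda\varphi}$ the Moreau envelope with $\nabla\mathrm{env}_{\lambda\varphi}(x)=(x-\mathrm{prox}_{\lambda\varphi}(x))/\lambda$, and the normal map $F^\lambda_{\mathrm{nor}}(z)=\nabla f(\mathrm{prox}_{\lambda\varphi}(z))+\frac1\lambda(z-\mathrm{prox}_{\lambda\varphi}(z))$. For $\xi\ge0$ the merit function is $H_\xi(z)=\psi(\mathrm{prox}_{\lambda\varphi}(z))+\frac{\xi\lambda}{2}\|F^\lambda_{\mathrm{nor}}(z)\|^2$. Method: on a filtered probability space $(\Omega,\mathcal F,\{\mathcal F_k\}_k,\mathbb P)$, with $\lambda>0$, step sizes $\alpha_k>0$, deterministic $z^0$, $x^0=\mathrm{prox}_{\lambda\varphi}(z^0)$, and $\mathcal F_{k+1}$-measurable random vectors $g^k$, set $z^{k+1}=z^k-\alpha_k(g^k+\nabla\mathrm{env}_{\lambda\varphi}(z^k))$, $x^{k+1}=\mathrm{prox}_{\lambda\varphi}(z^{k+1})$. Let $e^k=g^k-\nabla f(x^k)$. $L(\omega)=\sup_{\bar x\in\mathrm{cl}(\mathrm{conv}\{x^k(\omega)\}_k)}\mathrm{lip}\,\nabla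 f(\bar x)$ with $\mathrm{lip}\,\nabla f(\bar x)=\limsup_{x,x'\to\bar x,\,x\ne x'}\|\nabla f(x)-\nabla f(x')\|/\|x-x'\|$. Time windows: $\tau_{k,n}=\sum_{i=k}^{n-1}\alpha_i$ ($\tau_{k,k}=0$), $\varpi(k,T)=\max\{k+1,\sup\{n\ge k:\tau_{k,n}\le T\}\}$; for $T>0$ the time indices are $m_0=0$, $m_{k+1}=\varpi(m_k,T)$, and $s_k=\max_{m_k<j\le m_{k+1}}\|\sum_{i=m_k}^{j-1}\alpha_ie^i\|$. Conditions: (A.3) $\sum_k\alpha_k=\infty$ and $\alpha_k\to0$. (A.4) There are $\{\sigma_k\}_k\subseteq\mathbb R_+$ with $\mathbb E\|e^k\|^2\le\sigma_k^2$ and a positive sequence $\{\beta_k\}_k$, non-decreasing for all $k$ large, with $\sum_k\alpha_k^2\beta_k^2\sigma_k^2<\infty$. *)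

theory Defs
  imports "HOL-Analysis.Analysis" "HOL-Probability.Probability"
begin

definition proper_fun :: "('a \<Rightarrow> ereal) \<Rightarrow> bool" where
  "proper_fun \<phi> \<longleftrightarrow> (\<forall>x. \<phi> x \<noteq> -\<infinity>) \<and> (\<exists>x. \<phi> x \<noteq> \<infinity>)"

definition convex_fun :: "('a::real_vector \<Rightarrow> ereal) \<Rightarrow> bool" where
  "convex_fun \<phi> \<longleftrightarrow> (\<forall>x y t. 0 < t \<and> t < 1 \<longrightarrow>
     \<phi> ((1 - t) *\<^sub>R x + t *\<^sub>R y) \<le> ereal (1 - t) * \<phi> x + ereal t * \<phi> y)"

definition lsc_fun :: "('a::topological_space \<Rightarrow> ereal) \<Rightarrow> bool" where
  "lsc_fun \<phi> \<longleftrightarrow> (\<forall>x. \<phi> x \<le> Liminf (at x) \<phi>)"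

definition edom :: "('a \<Rightarrow> ereal) \<Rightarrow> 'a set" where
  "edom \<phi> = {x. \<phi> x < \<infinity>}"

text \<open>Gradient of a real function on a Euclidean space (meaningful where f is differentiable).\<close>
definition grad :: "('a::euclidean_space \<Rightarrow> real) \<Rightarrow> 'a \<Rightarrow> 'a" where
  "grad f x = (THE g. (f has_derivative (\<lambda>h. g \<bullet> h)) (at x))"

definition prox :: "real \<Rightarrow> ('a::euclidean_space \<Rightarrow> ereal) \<Rightarrow> 'a \<Rightarrow> 'a" where
  "prox lam \<phi> x = (THE y. \<forall>w. \<phi> y + ereal (norm (x - y) ^ 2 / (2 * lam))
                            \<le> \<phi> w + ereal (norm (x - w) ^ 2 / (2 * lam)))"

definition grad_env :: "real \<Rightarrow> ('a::euclidean_space \<Rightarrow> ereal) \<Rightarrow> 'a \<Rightarrow> 'a" where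
  "grad_env lam \<phi> x = (1 / lam) *\<^sub>R (x - prox lam \<phi> x)"

definition Fnor :: "('a::euclidean_space \<Rightarrow> real) \<Rightarrow> real \<Rightarrow> ('a \<Rightarrow> ereal) \<Rightarrow> 'a \<Rightarrow> 'a" where
  "Fnor f lam \<phi> z = grad f (prox lam \<phi> z) + (1 / lam) *\<^sub>R (z - prox lam \<phi> z)"

definition Hmerit :: "('a::euclidean_space \<Rightarrow> real) \<Rightarrow> real \<Rightarrow> ('a \<Rightarrow> ereal) \<Rightarrow> real \<Rightarrow> 'a \<Rightarrow> ereal" where
  "Hmerit f lam \<phi> xi z =
     ereal (f (prox lam \<phi> z)) + \<phi> (prox lam \<phi> z)
     + ereal (xi * lam / 2 * norm (Fnor f lam \<phi> z) ^ 2)"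

text \<open>lip g xb = limsup_{x,x' -> xb, x ~= x'} ||g x - g x'|| / ||x - x'||.\<close>
definition lip :: "('a::real_normed_vector \<Rightarrow> 'b::real_normed_vector) \<Rightarrow> 'a \<Rightarrow> ereal" where
  "lip g xb = (INF \<delta>\<in>{0<..}. SUP p\<in>{(x, x'). x \<in> ball xb \<delta> \<and> x' \<in> ball xb \<delta> \<and> x \<noteq> x'}.
                 ereal (norm (g (fst p) - g (snd p)) / norm (fst p - snd p)))"

definition tau :: "(nat \<Rightarrow> real) \<Rightarrow> nat \<Rightarrow> nat \<Rightarrow> real" where
  "tau \<alpha> k n = (\<Sum>i\<in>{k..<n}. \<alpha> i)"

definition varpi :: "(nat \<Rightarrow> real) \<Rightarrow> nat \<Rightarrow> real \<Rightarrow> nat" where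
  "varpi \<alpha> k T = max (k + 1) (Sup {n. k \<le> n \<and> tau \<alpha> k n \<le> T})"

primrec tidx :: "(nat \<Rightarrow> real) \<Rightarrow> real \<Rightarrow> nat \<Rightarrow> nat" where
  "tidx \<alpha> T 0 = 0"
| "tidx \<alpha> T (Suc k) = varpi \<alpha> (tidx \<alpha> T k) T"

definition sagg :: "(nat \<Rightarrow> real) \<Rightarrow> real \<Rightarrow> (nat \<Rightarrow> 'a::real_normed_vector) \<Rightarrow> nat \<Rightarrow> real" where
  "sagg \<alpha> T e k = Max ((\<lambda>j. norm (\<Sum>i\<in>{tidx \<alpha> T k..<j}. \<alpha> i *\<^sub>R e i))
                        ` {tidx \<alpha> T k <.. tidx \<alpha> T (Suc k)})"

end

theory Submission
  imports Defs
begin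


lemma lsc_nbhd:
  assumes "lsc_fun \<phi>" "ereal r < \<phi> (x::'a::metric_space)"
  shows "\<exists>d>0. \<forall>y. dist y x < d \<longrightarrow> ereal r < \<phi> y"
proof -
  have "ereal r < Liminf (at x) \<phi>" using assms unfolding lsc_fun_def
    using order_less_le_trans by blast
  then have "eventually (\<lambda>y. \<phi> y > ereal r) (at x)" by (rule less_LiminfD)
  then obtain d where d: "d>0" "\<forall>y. y \<noteq> x \<and> dist y x < d \<longrightarrow> ereal r < \<phi> y"
    unfolding eventually_at by auto
  show ?thesis using d assms(2) by (intro exI[of _ d]) auto
qed

lemma proper_finite:
  assumes "proper_fun \<phi>"
  obtains y0 v where "\<phi> y0 = ereal v"
proof -
  obtain y0 where "\<phi> y0 \<noteq> \<infinity>" using assms unfolding proper_fun_def by auto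
  moreover have "\<phi> y0 \<noteq> -\<infinity>" using assms unfolding proper_fun_def by auto
  ultimately show ?thesis using that by (cases "\<phi> y0") auto
qed

lemma convex_lower_bound:
  fixes \<phi> :: "'a::real_normed_vector \<Rightarrow> ereal"
  assumes pr: "proper_fun \<phi>" and cv: "convex_fun \<phi>" and ls: "lsc_fun \<phi>"
  shows "\<exists>y0 v a b. \<phi> y0 = ereal v \<and> b \<ge> 0 \<and> (\<forall>y. ereal (a - b * norm (y - y0)) \<le> \<phi> y)"
proof -
  obtain y0 v where y0: "\<phi> y0 = ereal v" using proper_finite[OF pr] by blast
  obtain \<rho> where rho: "\<rho> > 0" "\<forall>y. dist y y0 < \<rho> \<longrightarrow> ereal (v - 1) < \<phi> y"
    using lsc_nbhd[OF ls, of "v - 1" y0] y0 by auto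
  have "ereal (v - 1 - (2/\<rho>) * norm (y - y0)) \<le> \<phi> y" for y
  proof (cases "norm (y - y0) < \<rho>")
    case True
    then have "ereal (v - 1) < \<phi> y" using rho by (simp add: dist_norm)
    moreover have "v - 1 - (2/\<rho>) * norm (y - y0) \<le> v - 1" using rho by simp
    ultimately show ?thesis by (meson ereal_less_eq(3) le_less_trans less_imp_le)
  next
    case False
    define n where "n = norm (y - y0)"
    have n: "n \<ge> \<rho>" using False n_def by simp
    define t where "t = \<rho> / (2 * n)"
    have t: "0 < t" "t < 1" using n rho by (auto simp: t_def field_simps)
    define y1 where "y1 = (1 - t) *\<^sub>R y0 + t *\<^sub>R y"
    have "y1 - y0 = t *\<^sub>R (y - y0)" by (simp add: y1_def algebra_simps)
    then have "norm (y1 - y0) = t * n" using t by (simp add: n_def)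
    also have "\<dots> = \<rho> / 2" using n rho by (simp add: t_def)
    finally have "dist y1 y0 < \<rho>" using rho by (simp add: dist_norm)
    then have lo: "ereal (v - 1) < \<phi> y1" using rho by auto
    have up: "\<phi> y1 \<le> ereal (1 - t) * \<phi> y0 + ereal t * \<phi> y"
      using cv t unfolding convex_fun_def y1_def by blast
    show ?thesis
    proof (cases "\<phi> y")
      case (real w)
      have "ereal (v - 1) < ereal ((1 - t) * v + t * w)"
        using order_less_le_trans[OF lo up] y0 real by simp
      then have "v - 1 < (1 - t) * v + t * w" by simp
      then have "t * w > t * v - 1" by (simp add: algebra_simps)
      then have "w > v - 1 / t" using t by (simp add: field_simps)
      moreover have "1 / t = (2/\<rho>) * n" using rho n by (simp add: t_def field_simps)
      ultimately show ?thesis using real n_def by simp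
    next
      case PInf then show ?thesis by simp
    next
      case MInf then show ?thesis using pr unfolding proper_fun_def by auto
    qed
  qed
  then show ?thesis using y0 rho
    by (intro exI[of _ y0] exI[of _ v] exI[of _ "v - 1"] exI[of _ "2/\<rho>"]) auto
qed



lemma ereal_add_real_less:
  assumes "ereal r < (x::ereal)"
  shows "ereal (r + s) < x + ereal s"
  using assms by (cases x) auto

lemma lsc_sublevel_closed:
  fixes \<phi> :: "'a::metric_space \<Rightarrow> ereal"
  assumes ls: "lsc_fun \<phi>" and q: "continuous_on UNIV q"
  shows "closed {y. \<phi> y + ereal (q y) \<le> ereal c}"
proof -
  have "open {y. ereal c < \<phi> y + ereal (q y)}"
    unfolding open_dist
  proof (intro ballI)
    fix y0 assume "y0 \<in> {y. ereal c < \<phi> y + ereal (q y)}"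
    then have "ereal c < \<phi> y0 + ereal (q y0)" by simp
    then have "ereal (c - q y0) < \<phi> y0" by (cases "\<phi> y0") auto
    then obtain r where r: "ereal (c - q y0) < ereal r" "ereal r < \<phi> y0"
      using ereal_dense2 by blast
    define \<epsilon> where "\<epsilon> = r - (c - q y0)"
    have eps: "\<epsilon> > 0" using r(1) by (simp add: \<epsilon>_def)
    obtain d1 where d1: "d1 > 0" "\<forall>y. dist y y0 < d1 \<longrightarrow> ereal r < \<phi> y"
      using lsc_nbhd[OF ls r(2)] by blast
    obtain d2 where d2: "d2 > 0" "\<forall>y. dist y y0 < d2 \<longrightarrow> dist (q y) (q y0) < \<epsilon>"
      using q eps unfolding continuous_on_iff by blast
    show "\<exists>e>0. \<forall>y. dist y y0 < e \<longrightarrow> y \<in> {y. ereal c < \<phi> y + ereal (q y)}"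
    proof (intro exI[of _ "min d1 d2"] conjI allI impI)
      show "min d1 d2 > 0" using d1 d2 by simp
      fix y assume "dist y y0 < min d1 d2"
      then have a: "ereal r < \<phi> y" and b: "\<bar>q y - q y0\<bar> < \<epsilon>"
        using d1 d2 by (auto simp: dist_real_def)
      have "ereal (r + q y) < \<phi> y + ereal (q y)" by (rule ereal_add_real_less[OF a])
      moreover have "c \<le> r + q y" using b by (simp add: \<epsilon>_def)
      moreover have "ereal c \<le> ereal (r + q y)" using \<open>c \<le> r + q y\<close> by simp
      ultimately have "ereal c < \<phi> y + ereal (q y)" using order_le_less_trans by blast
      then show "y \<in> {y. ereal c < \<phi> y + ereal (q y)}" by simp
    qed
  qed
  then have "closed (- {y. ereal c < \<phi> y + ereal (q y)})" by (simp add: closed_def)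
  moreover have "- {y. ereal c < \<phi> y + ereal (q y)} = {y. \<phi> y + ereal (q y) \<le> ereal c}"
    by (auto simp: not_less)
  ultimately show ?thesis by simp
qed

lemma amgm_aux: "(lam::real) > 0 \<Longrightarrow> b * r \<le> r^2 / (2*lam) + lam * b^2 / 2"
proof -
  assume l: "lam > 0"
  have "0 \<le> (r - lam * b)^2 / (2*lam)" using l by simp
  also have "\<dots> = r^2 / (2*lam) + lam * b^2 / 2 - b * r" using l
    by (simp add: field_simps power2_eq_square)
  finally show ?thesis by simp
qed

lemma prox_min_exists:
  fixes \<phi> :: "'a::euclidean_space \<Rightarrow> ereal"
  assumes pr: "proper_fun \<phi>" and cv: "convex_fun \<phi>" and ls: "lsc_fun \<phi>" and l: "lam > 0"
  shows "\<exists>p. \<forall>w. \<phi> p + ereal (norm (z - p) ^ 2 / (2 * lam)) \<le> \<phi> w + ereal (norm (z - w) ^ 2 / (2 * lam))"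
proof -
  obtain y0 v a b where y0: "\<phi> y0 = ereal v" "b \<ge> 0" "\<forall>y. ereal (a - b * norm (y - y0)) \<le> \<phi> y"
    using convex_lower_bound[OF pr cv ls] by blast
  define h where "h y = \<phi> y + ereal (norm (z - y) ^ 2 / (2 * lam))" for y
  define d where "d = norm (z - y0)"
  have hlow: "ereal (a - b * (norm (z - y) + d) + norm (z - y) ^ 2 / (2 * lam)) \<le> h y" for y
  proof -
    have "norm (y - y0) \<le> norm (z - y) + d"
    proof -
      have "y - y0 = (z - y0) - (z - y)" by simp
      then have "norm (y - y0) \<le> norm (z - y0) + norm (z - y)" by (metis norm_triangle_ineq4)
      then show ?thesis by (simp add: d_def)
    qed
    then have "a - b * (norm (z - y) + d) \<le> a - b * norm (y - y0)" using y0(2)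
      by (simp add: mult_left_mono)
    then have "ereal (a - b * (norm (z - y) + d)) \<le> ereal (a - b * norm (y - y0))" by simp
    then have "ereal (a - b * (norm (z - y) + d)) \<le> \<phi> y" using y0(3) order_trans by blast
    then have "ereal (a - b * (norm (z - y) + d)) + ereal (norm (z - y) ^ 2 / (2 * lam)) \<le> h y"
      unfolding h_def by (rule add_right_mono)
    then show ?thesis by simp
  qed
  define B where "B = a - b * d - lam * b^2 / 2"
  have hB: "ereal B \<le> h y" for y
  proof -
    have "b * norm (z - y) \<le> norm (z - y) ^ 2 / (2*lam) + lam * b^2 / 2" by (rule amgm_aux[OF l])
    then have "B \<le> a - b * (norm (z - y) + d) + norm (z - y) ^ 2 / (2 * lam)"
      unfolding B_def by (simp add: algebra_simps)
    then have "ereal B \<le> ereal (a - b * (norm (z - y) + d) + norm (z - y) ^ 2 / (2 * lam))" by simp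
    then show ?thesis using hlow[of y] by (rule order_trans)
  qed
  define H0 where "H0 = v + d^2 / (2*lam)"
  have hy0: "h y0 = ereal H0" unfolding h_def H0_def d_def using y0(1) by simp
  define m where "m = (INF y. h y)"
  have mle: "m \<le> ereal H0" unfolding m_def using hy0 by (metis INF_lower UNIV_I)
  have mge: "ereal B \<le> m" unfolding m_def using hB by (simp add: le_INF_iff)
  obtain mr where mr: "m = ereal mr" using mle mge by (cases m) auto
  define S where "S n = {y. h y \<le> ereal (mr + 1 / (real n + 1))}" for n :: nat
  have Sne: "S n \<noteq> {}" for n
  proof -
    have "m < ereal (mr + 1 / (real n + 1))" using mr by simp
    then obtain y where "h y < ereal (mr + 1 / (real n + 1))" unfolding m_def
      by (meson INF_less_iff)
    then show ?thesis unfolding S_def by (auto intro: less_imp_le)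
  qed
  have Scl: "closed (S n)" for n
  proof -
    have "continuous_on UNIV (\<lambda>y. norm (z - y) ^ 2 / (2 * lam))"
      using l by (intro continuous_intros) auto
    from lsc_sublevel_closed[OF ls this] show ?thesis unfolding S_def h_def .
  qed
  have Smono: "S n \<subseteq> S k" if "k \<le> n" for k n
  proof -
    have "1 / (real n + 1) \<le> 1 / (real k + 1)" using that by (simp add: frac_le)
    then show ?thesis unfolding S_def by (auto elim: order_trans)
  qed
  have Sbd: "bounded (S 0)"
  proof -
    define C where "C = H0 + 1 - a + b * d"
    define R where "R = 1 + 4 * lam * (C + lam * b^2)"
    have "S 0 \<subseteq> cball z R"
    proof
      fix y assume "y \<in> S 0"
      then have hy1: "h y \<le> ereal (mr + 1)" unfolding S_def by simp
      have "mr \<le> H0" using mle mr by simp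
      with hy1 have "ereal (mr + 1) \<le> ereal (H0 + 1)" using \<open>mr \<le> H0\<close> by simp
      have "h y \<le> ereal (H0 + 1)" using hy1 \<open>ereal (mr + 1) \<le> ereal (H0 + 1)\<close> by (rule order_trans)
      then have "ereal (a - b * (norm (z - y) + d) + norm (z - y) ^ 2 / (2 * lam)) \<le> ereal (H0 + 1)"
        by (rule order_trans[OF hlow[of y]])
      then have i1: "a - b * (norm (z - y) + d) + norm (z - y) ^ 2 / (2 * lam) \<le> H0 + 1" by simp
      define r where "r = norm (z - y)"
      have i2: "b * r \<le> r^2 / (2 * (2*lam)) + (2*lam) * b^2 / 2" by (rule amgm_aux) (use l in simp)
      have "r^2 / (4 * lam) \<le> C + lam * b^2" using i1 i2 unfolding C_def r_def[symmetric]
        by (simp add: field_simps)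
      then have "r^2 \<le> 4 * lam * (C + lam * b^2)" using l by (simp add: field_simps)
      moreover have "r \<le> 1 + r^2"
      proof -
        have g: "0 \<le> (r - 1/2)^2" by simp
        have e: "(r - 1/2)^2 = r^2 - r + 1/4" by (simp add: power2_eq_square algebra_simps)
        show ?thesis using g e by linarith
      qed
      ultimately have "r \<le> R" unfolding R_def by simp
      then show "y \<in> cball z R" by (simp add: r_def dist_norm)
    qed
    then show ?thesis using bounded_cball bounded_subset by blast
  qed
  obtain p where p: "\<And>n. p \<in> S n" using bounded_closed_nest[of S] Scl Sne Smono Sbd by blast
  have "h p \<le> m"
  proof -
    have hp1: "h p \<le> ereal (mr + 1)" using p[of 0] unfolding S_def by simp
    obtain hp where hp: "h p = ereal hp" using hp1 hB[of p] by (cases "h p") auto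
    have "hp \<le> mr"
    proof (rule field_le_epsilon)
      fix e :: real assume e: "e > 0"
      obtain n :: nat where n: "n > 0" "inverse (real n) < e" using ex_inverse_of_nat_less[OF e] by blast
      have "1 / (real n + 1) \<le> inverse (real n)" using n(1) by (simp add: inverse_eq_divide frac_le)
      then have "1 / (real n + 1) < e" using n(2) by linarith
      moreover have "hp \<le> mr + 1 / (real n + 1)" using p[of n] hp unfolding S_def by simp
      ultimately show "hp \<le> mr + e" by simp
    qed
    then show ?thesis using hp mr by simp
  qed
  then have "\<forall>w. h p \<le> h w" unfolding m_def by (meson INF_lower UNIV_I order_trans)
  then show ?thesis unfolding h_def by blast
qed



definition Pmin :: "real \<Rightarrow> ('a::euclidean_space \<Rightarrow> ereal) \<Rightarrow> 'a \<Rightarrow> 'a \<Rightarrow> bool" where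
  "Pmin lam \<phi> z y \<longleftrightarrow> (\<forall>w. \<phi> y + ereal (norm (z - y) ^ 2 / (2 * lam))
                            \<le> \<phi> w + ereal (norm (z - w) ^ 2 / (2 * lam)))"

lemma norm_sub_sq:
  fixes u v :: "'a::real_inner"
  shows "norm (u - t *\<^sub>R v) ^ 2 = norm u ^ 2 - 2 * t * inner u v + t^2 * norm v ^ 2"
proof -
  have "inner u (t *\<^sub>R v) = ((norm u ^ 2 + norm (t *\<^sub>R v) ^ 2) - norm (u - t *\<^sub>R v) ^ 2) / 2"
    by (rule dot_norm_neg)
  then have X: "norm (u - t *\<^sub>R v) ^ 2 = norm u ^ 2 + norm (t *\<^sub>R v) ^ 2 - 2 * inner u (t *\<^sub>R v)"
    by (simp add: field_simps)
  have "norm (t *\<^sub>R v) ^ 2 = t^2 * norm v ^ 2" by (simp add: power_mult_distrib)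
  moreover have "inner u (t *\<^sub>R v) = t * inner u v" by simp
  ultimately show ?thesis using X by simp
qed

lemma inner_id1:
  fixes a b c d :: "'a::real_inner"
  shows "inner a (c - d) + inner b (d - c) = - inner (a - b) (d - c)"
proof -
  have "inner b (d - c) = - inner b (c - d)" by (metis inner_minus_right minus_diff_eq)
  moreover have "inner (a - b) (d - c) = - inner (a - b) (c - d)" by (metis inner_minus_right minus_diff_eq)
  moreover have "inner (a - b) (c - d) = inner a (c - d) - inner b (c - d)" by (rule inner_diff_left)
  ultimately show ?thesis by linarith
qed

lemma inner_id2:
  fixes z p1 p2 :: "'a::real_inner"
  shows "inner (z - p1) (p2 - p1) + inner (z - p2) (p1 - p2) = norm (p2 - p1) ^ 2"
proof -
  have "inner (z - p1) (p2 - p1) + inner (z - p2) (p1 - p2) = - inner ((z - p1) - (z - p2)) (p1 - p2)"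
    by (rule inner_id1)
  moreover have "(z - p1) - (z - p2) = p2 - p1" by simp
  moreover have "- inner (p2 - p1) (p1 - p2) = inner (p2 - p1) (p2 - p1)" by (metis inner_minus_right minus_diff_eq)
  ultimately show ?thesis by (simp add: power2_norm_eq_inner)
qed

lemma Pmin_finite:
  assumes pr: "proper_fun \<phi>" and P: "Pmin lam \<phi> z p"
  obtains pp where "\<phi> p = ereal pp"
proof -
  obtain y0 v where y0: "\<phi> y0 = ereal v" using proper_finite[OF pr] by blast
  have "\<phi> p + ereal (norm (z - p) ^ 2 / (2 * lam)) \<le> ereal (v + norm (z - y0) ^ 2 / (2 * lam))"
    using P y0 unfolding Pmin_def by (metis plus_ereal.simps(1))
  then have "\<phi> p \<noteq> \<infinity>" by auto
  moreover have "\<phi> p \<noteq> -\<infinity>" using pr unfolding proper_fun_def by auto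
  ultimately show ?thesis using that by (cases "\<phi> p") auto
qed

lemma Pmin_subgrad:
  fixes \<phi> :: "'a::euclidean_space \<Rightarrow> ereal"
  assumes pr: "proper_fun \<phi>" and cv: "convex_fun \<phi>" and l: "lam > 0" and P: "Pmin lam \<phi> z p"
  shows "\<phi> p + ereal (inner (z - p) (w - p) / lam) \<le> \<phi> w"
proof -
  obtain pp where pp: "\<phi> p = ereal pp" using Pmin_finite[OF pr P] by blast
  show ?thesis
  proof (cases "\<phi> w")
    case PInf then show ?thesis by simp
  next
    case MInf then show ?thesis using pr unfolding proper_fun_def by auto
  next
    case (real ww)
    define u where "u = z - p"
    define v where "v = w - p"
    have key: "pp + inner u v / lam \<le> ww + t * norm v ^ 2 / (2 * lam)" if t: "0 < t" "t < 1" for t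
    proof -
      define wt where "wt = (1 - t) *\<^sub>R p + t *\<^sub>R w"
      have c: "\<phi> wt \<le> ereal (1 - t) * \<phi> p + ereal t * \<phi> w"
        using cv t unfolding convex_fun_def wt_def by blast
      have c2: "\<phi> wt \<le> ereal ((1 - t) * pp + t * ww)" using c pp real by simp
      have m: "\<phi> p + ereal (norm (z - p) ^ 2 / (2 * lam)) \<le> \<phi> wt + ereal (norm (z - wt) ^ 2 / (2 * lam))"
        using P unfolding Pmin_def by blast
      have "\<phi> wt + ereal (norm (z - wt) ^ 2 / (2 * lam)) \<le> ereal ((1 - t) * pp + t * ww) + ereal (norm (z - wt) ^ 2 / (2 * lam))"
        using c2 by (rule add_right_mono)
      then have mm: "\<phi> wt + ereal (norm (z - wt) ^ 2 / (2 * lam)) \<le> ereal ((1 - t) * pp + t * ww + norm (z - wt) ^ 2 / (2 * lam))"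
        by simp
      have m': "ereal (pp + norm (z - p) ^ 2 / (2 * lam)) \<le> \<phi> wt + ereal (norm (z - wt) ^ 2 / (2 * lam))"
        using m pp by simp
      have "ereal (pp + norm (z - p) ^ 2 / (2 * lam)) \<le> ereal ((1 - t) * pp + t * ww + norm (z - wt) ^ 2 / (2 * lam))"
        using order_trans[OF m' mm] .
      then have r: "pp + norm u ^ 2 / (2 * lam) \<le> (1 - t) * pp + t * ww + norm (z - wt) ^ 2 / (2 * lam)"
        by (simp add: u_def)
      have "z - wt = u - t *\<^sub>R v" by (simp add: wt_def u_def v_def algebra_simps)
      then have "norm (z - wt) ^ 2 = norm u ^ 2 - 2 * t * inner u v + t^2 * norm v ^ 2"
        by (simp add: norm_sub_sq)
      then have r2: "pp + norm u ^ 2 / (2 * lam) \<le> (1 - t) * pp + t * ww + (norm u ^ 2 - 2 * t * inner u v + t^2 * norm v ^ 2) / (2 * lam)"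
        using r by simp
      have e1: "(norm u ^ 2 - 2 * t * inner u v + t^2 * norm v ^ 2) / (2 * lam)
          = norm u ^ 2 / (2 * lam) - t * (inner u v / lam) + t * (t * norm v ^ 2 / (2 * lam))"
        using l by (simp add: diff_divide_distrib add_divide_distrib power2_eq_square)
      have e2: "(1 - t) * pp = pp - t * pp" by (simp add: algebra_simps)
      have "t * pp + t * (inner u v / lam) \<le> t * ww + t * (t * norm v ^ 2 / (2 * lam))"
        using r2 e1 e2 by linarith
      then have "t * (pp + inner u v / lam) \<le> t * (ww + t * norm v ^ 2 / (2 * lam))"
        by (simp add: distrib_left)
      then show ?thesis using t by simp
    qed
    have "pp + inner u v / lam \<le> ww"
    proof (rule field_le_epsilon)
      fix e :: real assume e: "e > 0"
      define t where "t = min (1/2) (e * lam / (norm v ^ 2 + 1))"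
      have "0 \<le> norm v ^ 2" by simp
      then have d: "norm v ^ 2 + 1 > 0" by linarith
      have "0 < e * lam / (norm v ^ 2 + 1)" using divide_pos_pos[OF mult_pos_pos[OF e l] d] .
      then have t: "0 < t" "t < 1" by (auto simp: t_def)
      have "t \<le> e * lam / (norm v ^ 2 + 1)" by (simp add: t_def)
      then have "t * (norm v ^ 2 + 1) \<le> e * lam"
        using pos_le_divide_eq[OF d] by blast
      then have "t * norm v ^ 2 \<le> e * lam" using t by (simp add: distrib_left)
      then have "t * norm v ^ 2 / (2 * lam) \<le> e * lam / (2 * lam)" by (rule divide_right_mono) (use l in simp)
      also have "\<dots> = e / 2" using l by simp
      also have "\<dots> \<le> e" using e by simp
      finally show "pp + inner u v / lam \<le> ww + e" using key[OF t] by linarith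
    qed
    then show ?thesis using pp real by (simp add: u_def v_def)
  qed
qed

lemma Pmin_unique:
  fixes \<phi> :: "'a::euclidean_space \<Rightarrow> ereal"
  assumes pr: "proper_fun \<phi>" and cv: "convex_fun \<phi>" and l: "lam > 0"
    and P1: "Pmin lam \<phi> z p1" and P2: "Pmin lam \<phi> z p2"
  shows "p1 = p2"
proof -
  obtain a1 where a1: "\<phi> p1 = ereal a1" using Pmin_finite[OF pr P1] by blast
  obtain a2 where a2: "\<phi> p2 = ereal a2" using Pmin_finite[OF pr P2] by blast
  have i1: "a1 + inner (z - p1) (p2 - p1) / lam \<le> a2"
    using Pmin_subgrad[OF pr cv l P1, of p2] a1 a2 by simp
  have i2: "a2 + inner (z - p2) (p1 - p2) / lam \<le> a1"
    using Pmin_subgrad[OF pr cv l P2, of p1] a1 a2 by simp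
  have "inner (z - p1) (p2 - p1) + inner (z - p2) (p1 - p2) = norm (p1 - p2) ^ 2"
    using inner_id2[of z p1 p2] by (simp add: norm_minus_commute)
  moreover have "(inner (z - p1) (p2 - p1) + inner (z - p2) (p1 - p2)) / lam \<le> 0"
    using i1 i2 by (simp add: add_divide_distrib)
  ultimately have "norm (p1 - p2) ^ 2 \<le> 0" using l by (simp add: divide_le_0_iff)
  then show ?thesis by simp
qed

lemma prox_Pmin:
  fixes \<phi> :: "'a::euclidean_space \<Rightarrow> ereal"
  assumes pr: "proper_fun \<phi>" and cv: "convex_fun \<phi>" and ls: "lsc_fun \<phi>" and l: "lam > 0"
  shows "Pmin lam \<phi> z (prox lam \<phi> z)"
proof -
  obtain p where p: "Pmin lam \<phi> z p" using prox_min_exists[OF pr cv ls l, of z] unfolding Pmin_def by blast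
  have e: "prox lam \<phi> z = (THE y. Pmin lam \<phi> z y)" unfolding prox_def Pmin_def by (rule refl)
  have "(THE y. Pmin lam \<phi> z y) = p"
  proof (rule the_equality)
    show "Pmin lam \<phi> z p" by (rule p)
    fix y assume "Pmin lam \<phi> z y"
    then show "y = p" using Pmin_unique[OF pr cv l _ p] by blast
  qed
  with e have "prox lam \<phi> z = p" by simp
  then show ?thesis using p by simp
qed

lemma prox_props:
  fixes \<phi> :: "'a::euclidean_space \<Rightarrow> ereal"
  assumes pr: "proper_fun \<phi>" and cv: "convex_fun \<phi>" and ls: "lsc_fun \<phi>" and l: "lam > 0"
  shows "\<exists>pp. \<phi> (prox lam \<phi> z) = ereal pp"
    and "\<phi> (prox lam \<phi> z) + ereal (inner (z - prox lam \<phi> z) (w - prox lam \<phi> z) / lam) \<le> \<phi> w"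
proof -
  have P: "Pmin lam \<phi> z (prox lam \<phi> z)" by (rule prox_Pmin[OF assms])
  obtain pp where "\<phi> (prox lam \<phi> z) = ereal pp" by (rule Pmin_finite[OF pr P])
  then show "\<exists>pp. \<phi> (prox lam \<phi> z) = ereal pp" by blast
  show "\<phi> (prox lam \<phi> z) + ereal (inner (z - prox lam \<phi> z) (w - prox lam \<phi> z) / lam) \<le> \<phi> w"
    by (rule Pmin_subgrad[OF pr cv l P])
qed

lemma prox_firm:
  fixes \<phi> :: "'a::euclidean_space \<Rightarrow> ereal" and z1 z2 :: 'a
  assumes pr: "proper_fun \<phi>" and cv: "convex_fun \<phi>" and ls: "lsc_fun \<phi>" and l: "lam > 0"
  defines "p1 \<equiv> prox lam \<phi> z1" and "p2 \<equiv> prox lam \<phi> z2"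
  shows "inner ((z1 - p1) - (z2 - p2)) (p1 - p2) \<ge> 0"
proof -
  obtain a1 where a1: "\<phi> p1 = ereal a1" using prox_props(1)[OF assms(1-4)] p1_def by blast
  obtain a2 where a2: "\<phi> p2 = ereal a2" using prox_props(1)[OF assms(1-4)] p2_def by blast
  have i1: "a1 + inner (z1 - p1) (p2 - p1) / lam \<le> a2"
    using prox_props(2)[OF assms(1-4), of z1 p2] a1 a2 p1_def by simp
  have i2: "a2 + inner (z2 - p2) (p1 - p2) / lam \<le> a1"
    using prox_props(2)[OF assms(1-4), of z2 p1] a1 a2 p2_def by simp
  have "inner (z1 - p1) (p2 - p1) + inner (z2 - p2) (p1 - p2) = - inner ((z1 - p1) - (z2 - p2)) (p1 - p2)"
    by (rule inner_id1)
  moreover have "(inner (z1 - p1) (p2 - p1) + inner (z2 - p2) (p1 - p2)) / lam \<le> 0"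
    using i1 i2 by (simp add: add_divide_distrib)
  ultimately have "0 \<le> inner ((z1 - p1) - (z2 - p2)) (p1 - p2) / lam" by simp
  then show ?thesis using l by (simp add: zero_le_divide_iff)
qed



lemma lip_local:
  fixes g :: "'a::real_normed_vector \<Rightarrow> 'b::real_normed_vector"
  assumes "lip g c \<le> ereal L" "\<epsilon> > 0"
  shows "\<exists>\<delta>>0. \<forall>x x'. x \<in> ball c \<delta> \<and> x' \<in> ball c \<delta> \<longrightarrow> norm (g x - g x') \<le> (L + \<epsilon>) * norm (x - x')"
proof -
  have "ereal L < ereal (L + \<epsilon>)" using assms(2) by simp
  then have "lip g c < ereal (L + \<epsilon>)" using assms(1) by (rule le_less_trans[rotated])
  then obtain \<delta> where d: "\<delta> \<in> {0<..}"
    "(SUP p\<in>{(x, x'). x \<in> ball c \<delta> \<and> x' \<in> ball c \<delta> \<and> x \<noteq> x'}.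
                 ereal (norm (g (fst p) - g (snd p)) / norm (fst p - snd p))) < ereal (L + \<epsilon>)"
    unfolding lip_def INF_less_iff by blast
  have "norm (g x - g x') \<le> (L + \<epsilon>) * norm (x - x')" if xx: "x \<in> ball c \<delta>" "x' \<in> ball c \<delta>" for x x'
  proof (cases "x = x'")
    case True then show ?thesis by simp
  next
    case False
    then have "(x, x') \<in> {(x, x'). x \<in> ball c \<delta> \<and> x' \<in> ball c \<delta> \<and> x \<noteq> x'}" using xx by simp
    then have "ereal (norm (g x - g x') / norm (x - x')) \<le> (SUP p\<in>{(x, x'). x \<in> ball c \<delta> \<and> x' \<in> ball c \<delta> \<and> x \<noteq> x'}.
                 ereal (norm (g (fst p) - g (snd p)) / norm (fst p - snd p)))"
      by (metis (no_types, lifting) SUP_upper fst_conv snd_conv)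
    then have "ereal (norm (g x - g x') / norm (x - x')) < ereal (L + \<epsilon>)" using d(2) by (rule le_less_trans)
    then have "norm (g x - g x') / norm (x - x') < L + \<epsilon>" by simp
    moreover have "norm (x - x') > 0" using False by simp
    ultimately show ?thesis by (simp add: pos_divide_less_eq less_imp_le)
  qed
  then show ?thesis using d(1) by auto
qed

lemma segment_lip_eps:
  fixes g :: "'a::euclidean_space \<Rightarrow> 'b::real_normed_vector"
  assumes C: "convex C" "a \<in> C" "b \<in> C" and lipC: "\<forall>c\<in>C. lip g c \<le> ereal L" and e: "\<epsilon> > 0"
  shows "norm (g b - g a) \<le> (L + \<epsilon>) * norm (b - a)"
proof -
  define \<gamma> where "\<gamma> t = a + t *\<^sub>R (b - a)" for t :: real
  have \<gamma>C: "\<gamma> t \<in> C" if "t \<in> {0..1}" for t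
  proof -
    have "\<gamma> t = (1 - t) *\<^sub>R a + t *\<^sub>R b" by (simp add: \<gamma>_def algebra_simps)
    then show ?thesis using convexD_alt[OF C, of t] that by simp
  qed
  have "\<forall>t\<in>{0..1}. \<exists>\<delta>>0. \<forall>x x'. x \<in> ball (\<gamma> t) \<delta> \<and> x' \<in> ball (\<gamma> t) \<delta> \<longrightarrow> norm (g x - g x') \<le> (L + \<epsilon>) * norm (x - x')"
    using lip_local[OF _ e] lipC \<gamma>C by blast
  then obtain \<delta> where \<delta>: "\<And>t. t \<in> {0..1} \<Longrightarrow> \<delta> t > 0 \<and> (\<forall>x x'. x \<in> ball (\<gamma> t) (\<delta> t) \<and> x' \<in> ball (\<gamma> t) (\<delta> t) \<longrightarrow> norm (g x - g x') \<le> (L + \<epsilon>) * norm (x - x'))"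
    by metis
  define Op where "Op t = \<gamma> -` ball (\<gamma> t) (\<delta> t)" for t
  have contg: "continuous (at x) \<gamma>" for x unfolding \<gamma>_def by (intro continuous_intros)
  have openO: "open (Op t)" for t unfolding Op_def by (rule continuous_open_vimage[OF open_ball contg])
  have cover: "{0..1} \<subseteq> \<Union>(Op ` {0..1})"
  proof
    fix t :: real assume t: "t \<in> {0..1}"
    then have "t \<in> Op t" using \<delta>[OF t] by (simp add: Op_def)
    then show "t \<in> \<Union>(Op ` {0..1})" using t by blast
  qed
  obtain e0 where e0: "e0 > 0" "\<And>s. s \<in> {0..1} \<Longrightarrow> \<exists>G\<in>Op ` {0..1}. ball s e0 \<subseteq> G"
    using Heine_Borel_lemma[OF compact_Icc cover] openO by blast
  obtain N :: nat where N: "N > 0" "inverse (real N) < e0" using ex_inverse_of_nat_less[OF e0(1)] by blast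
  define s where "s i = real i / real N" for i :: nat
  have step: "norm (g (\<gamma> (s (Suc i))) - g (\<gamma> (s i))) \<le> (L + \<epsilon>) * (norm (b - a) / real N)" if i: "i < N" for i
  proof -
    have si: "s i \<in> {0..1}" using i N by (simp add: s_def)
    obtain G where G: "G \<in> Op ` {0..1}" "ball (s i) e0 \<subseteq> G" using e0(2)[OF si] by blast
    then obtain t where t: "t \<in> {0..1}" "ball (s i) e0 \<subseteq> Op t" by blast
    have "s (Suc i) - s i = inverse (real N)" by (simp add: s_def add_divide_distrib inverse_eq_divide)
    then have "dist (s i) (s (Suc i)) = inverse (real N)"
      unfolding dist_real_def abs_minus_commute[of "s i"] using N by simp
    then have "dist (s i) (s (Suc i)) < e0" using N(2) by simp
    then have "s (Suc i) \<in> Op t" "s i \<in> Op t" using t e0(1) by auto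
    then have "\<gamma> (s (Suc i)) \<in> ball (\<gamma> t) (\<delta> t)" "\<gamma> (s i) \<in> ball (\<gamma> t) (\<delta> t)" by (auto simp: Op_def)
    then have "norm (g (\<gamma> (s (Suc i))) - g (\<gamma> (s i))) \<le> (L + \<epsilon>) * norm (\<gamma> (s (Suc i)) - \<gamma> (s i))"
      using \<delta>[OF t(1)] by blast
    moreover have "\<gamma> (s (Suc i)) - \<gamma> (s i) = inverse (real N) *\<^sub>R (b - a)"
      using \<open>s (Suc i) - s i = inverse (real N)\<close> by (simp add: \<gamma>_def algebra_simps flip: scaleR_diff_left)
    then have "norm (\<gamma> (s (Suc i)) - \<gamma> (s i)) = norm (b - a) / real N" using N
      by (simp add: inverse_eq_divide)
    ultimately show ?thesis by simp
  qed
  have "s N = 1" using N by (simp add: s_def)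
  then have gN: "\<gamma> (s N) = b" by (simp add: \<gamma>_def)
  have g0: "\<gamma> (s 0) = a" by (simp add: \<gamma>_def s_def)
  have "g b - g a = (\<Sum>i<N. g (\<gamma> (s (Suc i))) - g (\<gamma> (s i)))"
    using sum_lessThan_telescope[of "\<lambda>i. g (\<gamma> (s i))" N] gN g0 by simp
  then have "norm (g b - g a) \<le> (\<Sum>i<N. norm (g (\<gamma> (s (Suc i))) - g (\<gamma> (s i))))"
    by (simp add: norm_sum)
  also have "\<dots> \<le> (\<Sum>i<N. (L + \<epsilon>) * (norm (b - a) / real N))"
    by (rule sum_mono) (use step in auto)
  also have "\<dots> = (L + \<epsilon>) * norm (b - a)" using N by simp
  finally show ?thesis .
qed

lemma segment_lip:
  fixes g :: "'a::euclidean_space \<Rightarrow> 'b::real_normed_vector"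
  assumes C: "convex C" "a \<in> C" "b \<in> C" and lipC: "\<forall>c\<in>C. lip g c \<le> ereal L"
  shows "norm (g b - g a) \<le> L * norm (b - a)"
proof (rule field_le_epsilon)
  fix e :: real assume e: "e > 0"
  have d: "norm (b - a) + 1 > 0" using norm_ge_zero[of "b - a"] by linarith
  define \<epsilon> where "\<epsilon> = e / (norm (b - a) + 1)"
  have eps: "\<epsilon> > 0" unfolding \<epsilon>_def using divide_pos_pos[OF e d] .
  have "norm (g b - g a) \<le> (L + \<epsilon>) * norm (b - a)" by (rule segment_lip_eps[OF C lipC eps])
  also have "\<dots> = L * norm (b - a) + \<epsilon> * norm (b - a)" by (simp add: distrib_right)
  also have "\<epsilon> * norm (b - a) \<le> \<epsilon> * (norm (b - a) + 1)" using eps by simp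
  also have "\<epsilon> * (norm (b - a) + 1) = e" unfolding \<epsilon>_def using d by simp
  finally show "norm (g b - g a) \<le> L * norm (b - a) + e" by simp
qed

lemma descent_lemma:
  fixes f :: "'a::euclidean_space \<Rightarrow> real"
  assumes C: "convex C" "a \<in> C" "b \<in> C" and CU: "C \<subseteq> U"
    and der: "\<forall>u\<in>U. (f has_derivative (\<lambda>h. grad f u \<bullet> h)) (at u)"
    and lipC: "\<forall>x\<in>C. \<forall>y\<in>C. norm (grad f x - grad f y) \<le> L * norm (x - y)"
  shows "f b \<le> f a + grad f a \<bullet> (b - a) + L / 2 * norm (b - a) ^ 2"
proof -
  define d where "d = b - a"
  define \<psi> where "\<psi> t = f (a + t *\<^sub>R d) - t * (grad f a \<bullet> d) - L / 2 * t^2 * norm d ^ 2" for t :: real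
  have "\<psi> 0 \<ge> \<psi> 1"
  proof (rule DERIV_nonpos_imp_nonincreasing[of 0 1 \<psi>])
    show "(0::real) \<le> 1" by simp
    fix t :: real assume t: "0 \<le> t" "t \<le> 1"
    have "a + t *\<^sub>R d = (1 - t) *\<^sub>R a + t *\<^sub>R b" by (simp add: d_def algebra_simps)
    then have uC: "a + t *\<^sub>R d \<in> C" using convexD_alt[OF C, of t] t by simp
    then have uU: "a + t *\<^sub>R d \<in> U" using CU by blast
    have dl: "((\<lambda>t. a + t *\<^sub>R d) has_derivative (\<lambda>s. s *\<^sub>R d)) (at t)"
      by (auto intro!: derivative_eq_intros)
    have "((\<lambda>t. f (a + t *\<^sub>R d)) has_derivative (\<lambda>s. grad f (a + t *\<^sub>R d) \<bullet> (s *\<^sub>R d))) (at t)"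
      using has_derivative_compose[OF dl der[rule_format, OF uU]] by simp
    moreover have "(\<lambda>s. grad f (a + t *\<^sub>R d) \<bullet> (s *\<^sub>R d)) = (*) (grad f (a + t *\<^sub>R d) \<bullet> d)"
      by (auto simp: fun_eq_iff mult.commute)
    ultimately have d1: "((\<lambda>t. f (a + t *\<^sub>R d)) has_real_derivative (grad f (a + t *\<^sub>R d) \<bullet> d)) (at t)"
      unfolding has_field_derivative_def by simp
    have d2: "(\<psi> has_real_derivative (grad f (a + t *\<^sub>R d) \<bullet> d - grad f a \<bullet> d - L / 2 * (2 * t) * norm d ^ 2)) (at t)"
      unfolding \<psi>_def
      by (rule derivative_eq_intros d1 refl | simp)+
    have "grad f (a + t *\<^sub>R d) \<bullet> d - grad f a \<bullet> d = (grad f (a + t *\<^sub>R d) - grad f a) \<bullet> d"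
      by (simp add: inner_diff_left)
    also have "\<dots> \<le> norm (grad f (a + t *\<^sub>R d) - grad f a) * norm d" by (rule norm_cauchy_schwarz)
    also have "\<dots> \<le> (L * norm ((a + t *\<^sub>R d) - a)) * norm d"
    proof -
      have "norm (grad f (a + t *\<^sub>R d) - grad f a) \<le> L * norm ((a + t *\<^sub>R d) - a)"
        using lipC uC C(2) by blast
      then show ?thesis by (rule mult_right_mono) simp
    qed
    also have "\<dots> = L / 2 * (2 * t) * norm d ^ 2" using t by (simp add: power2_eq_square)
    finally have "grad f (a + t *\<^sub>R d) \<bullet> d - grad f a \<bullet> d - L / 2 * (2 * t) * norm d ^ 2 \<le> 0" by simp
    with d2 show "\<exists>y. (\<psi> has_real_derivative y) (at t) \<and> y \<le> 0" by blast
  qed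
  then show ?thesis unfolding \<psi>_def d_def by simp
qed

lemma edom_convex:
  fixes \<phi> :: "'a::real_vector \<Rightarrow> ereal"
  assumes cv: "convex_fun \<phi>"
  shows "convex (edom \<phi>)"
proof (rule convexI)
  fix x y u v assume xy: "x \<in> edom \<phi>" "y \<in> edom \<phi>" and uv: "0 \<le> (u::real)" "0 \<le> v" "u + v = 1"
  show "u *\<^sub>R x + v *\<^sub>R y \<in> edom \<phi>"
  proof (cases "v = 0 \<or> v = 1")
    case True then show ?thesis using xy uv by auto
  next
    case False
    then have v: "0 < v" "v < 1" using uv by auto
    have u: "u = 1 - v" using uv by simp
    have "\<phi> (u *\<^sub>R x + v *\<^sub>R y) \<le> ereal (1 - v) * \<phi> x + ereal v * \<phi> y"
      using cv v unfolding convex_fun_def u by blast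
    moreover have "ereal (1 - v) * \<phi> x < \<infinity>" using xy v unfolding edom_def
      by (cases "\<phi> x") auto
    moreover have "ereal v * \<phi> y < \<infinity>" using xy v unfolding edom_def
      by (cases "\<phi> y") auto
    moreover have "\<And>a b::ereal. a < \<infinity> \<Longrightarrow> b < \<infinity> \<Longrightarrow> a + b < \<infinity>"
      by (case_tac a; case_tac b) auto
    ultimately have "\<phi> (u *\<^sub>R x + v *\<^sub>R y) < \<infinity>"
      by (meson order_le_less_trans)
    then show ?thesis unfolding edom_def by simp
  qed
qed



lemma amgm2: "(c::real) > 0 \<Longrightarrow> X * v \<le> c * X^2 / 2 + v^2 / (2 * c)"
proof -
  assume c: "c > 0"
  have "0 \<le> (c * X - v)^2 / (2 * c)" using c by simp
  also have "(c * X - v)^2 / (2 * c) = c * X^2 / 2 + v^2 / (2 * c) - X * v"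
    using c by (simp add: power2_eq_square field_simps)
  finally show ?thesis by simp
qed

lemma amgm1: "(X::real) * Y \<le> X^2 / 2 + Y^2 / 2"
  using amgm2[of 1 X Y] by simp

lemma one_step:
  fixes a b E Fv G :: "'a::real_inner"
  assumes t: "t > 0" and l: "lam > 0" and L: "L \<ge> 0"
    and xi: "xi = 1 / (2 + 2 * lam^2 * L^2)"
    and dl: "a + b = - (t *\<^sub>R Fv) - E"
    and P: "inner a b \<ge> 0"
    and G: "norm G \<le> L * norm a"
    and Dp: "Dp \<le> inner Fv a + inner b a / lam + L / 2 * norm a ^ 2"
  defines "M0 \<equiv> L / 2 + lam * L^2 / 2 + 1 / lam"
  shows "Dp + xi * lam / 2 * (norm (Fv + G + (1 / lam) *\<^sub>R b) ^ 2 - norm Fv ^ 2)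
         \<le> - (xi / 4 - 2 * t * M0) * t * norm Fv ^ 2 + (1 / 2 + 2 * t * M0) * norm E ^ 2 / t"
proof -
  define X where "X = norm a"
  define Y where "Y = norm b"
  define PP where "PP = inner a b"
  define nF where "nF = norm Fv"
  define nE where "nE = norm E"
  define Fa where "Fa = inner Fv a"
  define Fb where "Fb = inner Fv b"
  define Ea where "Ea = inner E a"
  define FE where "FE = inner Fv E"
  define FG where "FG = inner Fv G"
  define GB where "GB = norm (G + (1 / lam) *\<^sub>R b) ^ 2"
  have X0: "X \<ge> 0" "Y \<ge> 0" "nF \<ge> 0" "nE \<ge> 0" by (auto simp: X_def Y_def nF_def nE_def)
  have P0: "PP \<ge> 0" using P by (simp add: PP_def)
  have lam0: "lam \<noteq> 0" using l by simp
    have den: "2 + 2 * lam^2 * L^2 > 0" by (simp add: add_pos_nonneg)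
  have xi0: "xi > 0" using den by (simp add: xi)
  have xi1: "xi \<le> 1 / 2" unfolding xi using den by (simp add: field_simps)
  have xikey: "xi * (2 * (lam^2 * L^2) + 1) \<le> 1"
    unfolding xi using den by (simp add: field_simps)
    have r1: "X^2 + PP = - (t * Fa) - Ea"
  proof -
    have "inner (a + b) a = inner (- (t *\<^sub>R Fv) - E) a" using dl by simp
    moreover have "inner b a = inner a b" by (rule inner_commute)
    ultimately show ?thesis by (simp add: X_def PP_def Fa_def Ea_def inner_add_left inner_diff_left power2_norm_eq_inner)
  qed
  have r2: "PP + Y^2 = - (t * Fb) - (inner E b)"
  proof -
    have "inner (a + b) b = inner (- (t *\<^sub>R Fv) - E) b" using dl by simp
    then show ?thesis by (simp add: Y_def PP_def Fb_def inner_add_left inner_diff_left power2_norm_eq_inner)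
  qed
  have rE: "Ea + inner E b = - (t * FE) - nE^2"
  proof -
    have "inner E (a + b) = inner E (- (t *\<^sub>R Fv) - E)" using dl by simp
    moreover have "inner E Fv = FE" by (simp add: FE_def inner_commute)
    ultimately show ?thesis by (simp add: Ea_def nE_def inner_add_right inner_diff_right power2_norm_eq_inner)
  qed
  have nsq: "norm (x + y)^2 = norm x^2 + norm y^2 + 2 * inner x y" for x y :: 'a
    by (simp add: power2_norm_eq_inner inner_add_left inner_add_right inner_commute[of y x])
  have r3: "X^2 + Y^2 + 2 * PP = t^2 * nF^2 + 2 * (t * FE) + nE^2"
  proof -
    have e1: "- (t *\<^sub>R Fv) - E = - (t *\<^sub>R Fv + E)" by simp
    have "norm (a + b)^2 = norm (t *\<^sub>R Fv + E)^2" using dl e1 by (metis norm_minus_cancel)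
    moreover have "norm (a + b)^2 = X^2 + Y^2 + 2 * PP"
      using nsq[of a b] by (simp add: X_def Y_def PP_def)
    moreover have "norm (t *\<^sub>R Fv + E)^2 = t^2 * nF^2 + 2 * (t * FE) + nE^2"
      using nsq[of "t *\<^sub>R Fv" E] by (simp add: nF_def nE_def FE_def power_mult_distrib)
    ultimately show ?thesis by simp
  qed
  have hF: "norm (Fv + G + (1 / lam) *\<^sub>R b) ^ 2 - norm Fv ^ 2 = 2 * FG + 2 * (Fb / lam) + GB"
  proof -
    have "norm (Fv + (G + (1 / lam) *\<^sub>R b)) ^ 2 = norm Fv ^ 2 + 2 * inner Fv (G + (1 / lam) *\<^sub>R b) + norm (G + (1 / lam) *\<^sub>R b) ^ 2"
      using nsq[of Fv "G + (1 / lam) *\<^sub>R b"] by linarith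
    moreover have "inner Fv (G + (1 / lam) *\<^sub>R b) = FG + Fb / lam"
      by (simp add: FG_def Fb_def inner_add_right)
    ultimately show ?thesis by (simp add: GB_def add.assoc)
  qed
    have bEa: "- Ea \<le> X^2 / 2 + nE^2 / 2"
  proof -
    have "- Ea \<le> X * nE" unfolding Ea_def X_def nE_def
      by (metis inner_commute inner_minus_left norm_cauchy_schwarz norm_minus_cancel mult.commute)
    then show ?thesis using amgm1[of X nE] by linarith
  qed
  have bFE: "- (t * FE) \<le> t^2 * nF^2 / 2 + nE^2 / 2"
  proof -
    have "- FE \<le> nF * nE" unfolding FE_def nF_def nE_def
      by (metis inner_minus_right norm_cauchy_schwarz norm_minus_cancel)
    then have "t * (- FE) \<le> t * (nF * nE)" using t by (intro mult_left_mono) auto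
    moreover have "(t * nF) * nE \<le> (t * nF)^2 / 2 + nE^2 / 2" by (rule amgm1)
    ultimately show ?thesis by (simp add: power_mult_distrib mult.assoc)
  qed
  have bFE2: "t * FE \<le> t^2 * nF^2 / 2 + nE^2 / 2"
  proof -
    have "FE \<le> nF * nE" unfolding FE_def nF_def nE_def by (rule norm_cauchy_schwarz)
    then have "t * FE \<le> t * (nF * nE)" using t by (simp add: mult_left_mono)
    moreover have "(t * nF) * nE \<le> (t * nF)^2 / 2 + nE^2 / 2" by (rule amgm1)
    ultimately show ?thesis by (simp add: power_mult_distrib mult.assoc)
  qed
  have bFG: "FG \<le> nF * (L * X)"
  proof -
    have "FG \<le> nF * norm G" unfolding FG_def nF_def by (rule norm_cauchy_schwarz)
    also have "\<dots> \<le> nF * (L * X)" using G X0 by (simp add: X_def mult_left_mono)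
    finally show ?thesis .
  qed
  have bGB: "GB \<le> 2 * (L^2 * X^2) + 2 * (Y^2 / lam^2)"
  proof -
    have "norm (G + (1 / lam) *\<^sub>R b) \<le> norm G + norm ((1 / lam) *\<^sub>R b)" by (rule norm_triangle_ineq)
    also have "norm ((1 / lam) *\<^sub>R b) = Y / lam" using l by (simp add: Y_def)
    finally have n1: "norm (G + (1 / lam) *\<^sub>R b) \<le> L * X + Y / lam" using G by (simp add: X_def)
    have "GB \<le> (L * X + Y / lam)^2" unfolding GB_def
      by (rule power_mono[OF n1 norm_ge_zero])
    also have "\<dots> \<le> 2 * (L * X)^2 + 2 * (Y / lam)^2"
      using amgm1[of "L * X" "Y / lam"] by (simp add: power2_sum)
    finally show ?thesis by (simp add: power_mult_distrib power_divide)
  qed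
    have cross: "xi * lam * t * FG \<le> (1 - xi) * X^2 / 2 + xi * t^2 * nF^2 / 4"
  proof -
    have c: "1 - xi > 0" using xi1 by simp
    define v where "v = xi * lam * L * t * nF"
    have "xi * lam * t * FG \<le> xi * lam * t * (nF * (L * X))"
      using bFG xi0 l t by (simp add: mult_left_mono)
    also have "\<dots> = X * v" by (simp add: v_def algebra_simps)
    also have "\<dots> \<le> (1 - xi) * X^2 / 2 + v^2 / (2 * (1 - xi))" by (rule amgm2[OF c])
    also have "v^2 / (2 * (1 - xi)) \<le> xi * t^2 * nF^2 / 4"
    proof -
      have "xi * (lam^2 * L^2) * 2 \<le> 1 - xi" using xikey by (simp add: algebra_simps)
      then have A: "xi * (xi * (lam^2 * L^2) * 2) * (t^2 * nF^2) \<le> xi * (1 - xi) * (t^2 * nF^2)"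
        using xi0 by (simp add: mult_left_mono mult_right_mono)
      have B: "2 * v^2 = xi * (xi * (lam^2 * L^2) * 2) * (t^2 * nF^2)"
        by (simp add: v_def power2_eq_square algebra_simps)
      have C: "(1 - xi) * (xi * t^2 * nF^2) = xi * (1 - xi) * (t^2 * nF^2)"
        by (simp add: algebra_simps)
      have "2 * v^2 \<le> (1 - xi) * (xi * t^2 * nF^2)" unfolding B C by (rule A)
      then show ?thesis using c by (simp add: field_simps)
    qed
    finally show ?thesis by simp
  qed
    define D2 where "D2 = X^2 + Y^2 + 2 * PP"
  have D2le: "D2 \<le> 2 * (t^2 * nF^2) + 2 * nE^2" unfolding D2_def using r3 bFE2 by linarith
  have tDp: "t * Dp \<le> t * Fa + t * (PP / lam) + t * (L / 2 * X^2)"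
  proof -
    have "Dp \<le> Fa + PP / lam + L / 2 * X^2" using Dp by (simp add: Fa_def PP_def X_def inner_commute)
    then have "t * Dp \<le> t * (Fa + PP / lam + L / 2 * X^2)" using t by (simp add: mult_left_mono)
    then show ?thesis by (simp add: distrib_left)
  qed
  have Y2: "Y^2 \<ge> 0" "X^2 \<ge> 0" by simp_all
    have a1: "PP / lam \<le> D2 / (2 * lam)"
  proof -
    have "2 * PP \<le> D2" unfolding D2_def using Y2 by linarith
    then have "PP \<le> D2 / 2" by simp
    then have "PP / lam \<le> (D2 / 2) / lam" by (rule divide_right_mono) (use l in simp)
    then show ?thesis by simp
  qed
  have a2: "L / 2 * X^2 \<le> L / 2 * D2"
    by (rule mult_left_mono) (use Y2 P0 L in \<open>auto simp: D2_def\<close>)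
  have GB0: "GB \<ge> 0" by (simp add: GB_def)
  have a3: "xi * lam / 2 * GB \<le> lam * L^2 / 2 * X^2 + Y^2 / (2 * lam)"
  proof -
    have "xi * lam / 2 * GB \<le> (1/2) * lam / 2 * GB"
      by (rule mult_right_mono[OF _ GB0]) (use xi1 l in \<open>simp add: mult_right_mono\<close>)
    also have "\<dots> \<le> (1/2) * lam / 2 * (2 * (L^2 * X^2) + 2 * (Y^2 / lam^2))"
      by (rule mult_left_mono[OF bGB]) (use l in simp)
    also have "\<dots> = lam * L^2 / 2 * X^2 + Y^2 / (2 * lam)"
      using lam0 by (simp add: field_simps power2_eq_square)
    finally show ?thesis .
  qed
  have a4: "lam * L^2 / 2 * X^2 \<le> lam * L^2 / 2 * D2"
    by (rule mult_left_mono) (use Y2 P0 L l in \<open>auto simp: D2_def\<close>)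
  have a5: "Y^2 / (2 * lam) \<le> D2 / (2 * lam)"
    by (rule divide_right_mono) (use Y2 P0 l in \<open>auto simp: D2_def\<close>)
  have M0eq: "D2 / (2 * lam) + L / 2 * D2 + lam * L^2 / 2 * D2 + D2 / (2 * lam) = M0 * D2"
    using lam0 by (simp add: M0_def field_simps)
  have small: "PP / lam + L / 2 * X^2 + xi * lam / 2 * GB \<le> M0 * D2"
    using a1 a2 a3 a4 a5 M0eq by linarith
  have tsmall: "t * (PP / lam) + t * (L / 2 * X^2) + t * (xi * lam / 2 * GB) \<le> t * (M0 * D2)"
  proof -
    have "t * (PP / lam + L / 2 * X^2 + xi * lam / 2 * GB) \<le> t * (M0 * D2)"
      using small t by (intro mult_left_mono) auto
    then show ?thesis by (simp add: distrib_left)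
  qed
    have q1: "xi * (t * Fb) = - (xi * PP) - xi * Y^2 - xi * inner E b"
  proof -
    have "xi * (PP + Y^2) = xi * (- (t * Fb) - inner E b)" using r2 by simp
    then show ?thesis by (simp add: algebra_simps)
  qed
  have q2: "xi * inner E b = - (xi * (t * FE)) - xi * nE^2 - xi * Ea"
  proof -
    have "xi * (Ea + inner E b) = xi * (- (t * FE) - nE^2)" using rE by simp
    then show ?thesis by (simp add: algebra_simps)
  qed
  have q3: "xi * X^2 + xi * Y^2 + 2 * (xi * PP) = xi * (t^2 * nF^2) + 2 * (xi * (t * FE)) + xi * nE^2"
  proof -
    have "xi * (X^2 + Y^2 + 2 * PP) = xi * (t^2 * nF^2 + 2 * (t * FE) + nE^2)" using r3 by simp
    then show ?thesis by (simp add: algebra_simps)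
  qed
  have q4: "- (xi * (t * FE)) \<le> xi * (t^2 * nF^2) / 2 + xi * nE^2 / 2"
  proof -
    have "xi * (- (t * FE)) \<le> xi * (t^2 * nF^2 / 2 + nE^2 / 2)" using bFE xi0 by (intro mult_left_mono) auto
    then show ?thesis by (simp add: algebra_simps)
  qed
  have q5: "- Ea + xi * Ea \<le> X^2 / 2 - xi * X^2 / 2 + nE^2 / 2 - xi * nE^2 / 2"
  proof -
    have "(1 - xi) * (- Ea) \<le> (1 - xi) * (X^2 / 2 + nE^2 / 2)" using bEa xi1 by (intro mult_left_mono) auto
    then show ?thesis by (simp add: algebra_simps diff_divide_distrib add_divide_distrib)
  qed
  have q6: "xi * PP \<le> PP"
  proof -
    have "xi * PP \<le> 1 * PP" using xi1 P0 by (intro mult_right_mono) auto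
    then show ?thesis by simp
  qed
  have q7: "xi * lam * t * FG \<le> X^2 / 2 - xi * X^2 / 2 + xi * (t^2 * nF^2) / 4"
    using cross by (simp add: algebra_simps diff_divide_distrib add_divide_distrib)
  have eqL: "t * (Dp + xi * lam / 2 * (2 * FG + 2 * (Fb / lam) + GB))
      = t * Dp + xi * lam * t * FG + xi * (t * Fb) + t * (xi * lam / 2 * GB)"
    using lam0 by (simp add: field_simps)
  have main: "t * (Dp + xi * lam / 2 * (2 * FG + 2 * (Fb / lam) + GB))
      \<le> - (xi * (t^2 * nF^2)) / 4 + nE^2 / 2 + t * (M0 * D2)"
    using eqL tDp r1 q1 q2 q3 q4 q5 q6 q7 tsmall by linarith
  have D2b: "t * (M0 * D2) \<le> t * (M0 * (2 * (t^2 * nF^2) + 2 * nE^2))"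
  proof -
    have M0pos: "M0 \<ge> 0" unfolding M0_def using l L by simp
    show ?thesis using D2le M0pos t by (intro mult_left_mono) auto
  qed
  have fin: "t * (Dp + xi * lam / 2 * (2 * FG + 2 * (Fb / lam) + GB))
      \<le> t * (- (xi / 4 - 2 * t * M0) * t * nF ^ 2 + (1 / 2 + 2 * t * M0) * nE ^ 2 / t)"
  proof -
    have "- (xi * (t^2 * nF^2)) / 4 + nE^2 / 2 + t * (M0 * (2 * (t^2 * nF^2) + 2 * nE^2))
        = t * (- (xi / 4 - 2 * t * M0) * t * nF ^ 2 + (1 / 2 + 2 * t * M0) * nE ^ 2 / t)"
      using t by (simp add: field_simps power2_eq_square)
    then show ?thesis using main D2b by linarith
  qed
  have "Dp + xi * lam / 2 * (2 * FG + 2 * (Fb / lam) + GB)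
      \<le> - (xi / 4 - 2 * t * M0) * t * nF ^ 2 + (1 / 2 + 2 * t * M0) * nE ^ 2 / t"
    using fin t by simp
  then show ?thesis unfolding hF nF_def nE_def .
qed



lemma tele_sum:
  fixes z Fs e :: "nat \<Rightarrow> 'a::real_normed_vector"
  assumes rec: "\<And>i. z (Suc i) = z i - \<alpha> i *\<^sub>R (Fs i + e i)"
  shows "z (m + k) - z m = - (\<Sum>i\<in>{m..<m+k}. \<alpha> i *\<^sub>R (Fs i + e i))"
proof (induction k)
  case 0 then show ?case by simp
next
  case (Suc k)
  have "z (m + Suc k) - z m = (z (m + k) - z m) - \<alpha> (m + k) *\<^sub>R (Fs (m + k) + e (m + k))"
    using rec[of "m + k"] by simp
  also have "\<dots> = - (\<Sum>i\<in>{m..<m+Suc k}. \<alpha> i *\<^sub>R (Fs i + e i))"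
    using Suc by simp
  finally show ?case .
qed

lemma window_basic:
  fixes z Fs e :: "nat \<Rightarrow> 'a::real_normed_vector"
  assumes rec: "\<And>i. z (Suc i) = z i - \<alpha> i *\<^sub>R (Fs i + e i)"
    and alpha: "\<And>i. \<alpha> i > 0"
    and Lip: "\<And>i j. norm (Fs i - Fs j) \<le> K * norm (z i - z j)"
    and mj: "m \<le> j" and s0: "s \<ge> 0"
    and err: "j > m \<Longrightarrow> norm (\<Sum>i\<in>{m..<j}. \<alpha> i *\<^sub>R e i) \<le> s"
  shows "norm (z j - z m + (\<Sum>i\<in>{m..<j}. \<alpha> i) *\<^sub>R Fs m) \<le> (\<Sum>i\<in>{m..<j}. \<alpha> i * (K * norm (z i - z m))) + s"
proof -
  obtain k where k: "j = m + k" using mj le_Suc_ex by blast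
  have "z j - z m = - (\<Sum>i\<in>{m..<j}. \<alpha> i *\<^sub>R (Fs i + e i))" using tele_sum[where z=z and \<alpha>=\<alpha> and Fs=Fs and e=e, OF rec] k by simp
  moreover have "(\<Sum>i\<in>{m..<j}. \<alpha> i *\<^sub>R (Fs i + e i))
      = (\<Sum>i\<in>{m..<j}. \<alpha> i *\<^sub>R (Fs i - Fs m)) + (\<Sum>i\<in>{m..<j}. \<alpha> i *\<^sub>R e i) + (\<Sum>i\<in>{m..<j}. \<alpha> i) *\<^sub>R Fs m"
    by (simp add: scaleR_sum_left sum.distrib[symmetric] algebra_simps)
  ultimately have eq: "z j - z m + (\<Sum>i\<in>{m..<j}. \<alpha> i) *\<^sub>R Fs m
      = - (\<Sum>i\<in>{m..<j}. \<alpha> i *\<^sub>R (Fs i - Fs m)) - (\<Sum>i\<in>{m..<j}. \<alpha> i *\<^sub>R e i)"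
    by (simp add: algebra_simps)
  have n1: "norm (\<Sum>i\<in>{m..<j}. \<alpha> i *\<^sub>R (Fs i - Fs m)) \<le> (\<Sum>i\<in>{m..<j}. \<alpha> i * (K * norm (z i - z m)))"
  proof -
    have "norm (\<Sum>i\<in>{m..<j}. \<alpha> i *\<^sub>R (Fs i - Fs m)) \<le> (\<Sum>i\<in>{m..<j}. norm (\<alpha> i *\<^sub>R (Fs i - Fs m)))"
      by (rule norm_sum)
    also have "\<dots> \<le> (\<Sum>i\<in>{m..<j}. \<alpha> i * (K * norm (z i - z m)))"
    proof (rule sum_mono)
      fix i assume "i \<in> {m..<j}"
      have "norm (\<alpha> i *\<^sub>R (Fs i - Fs m)) = \<alpha> i * norm (Fs i - Fs m)" using alpha[of i] by simp
      also have "\<dots> \<le> \<alpha> i * (K * norm (z i - z m))" using alpha[of i] Lip[of i m] by (simp add: mult_left_mono)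
      finally show "norm (\<alpha> i *\<^sub>R (Fs i - Fs m)) \<le> \<alpha> i * (K * norm (z i - z m))" .
    qed
    finally show ?thesis .
  qed
  have n2: "norm (\<Sum>i\<in>{m..<j}. \<alpha> i *\<^sub>R e i) \<le> s"
  proof (cases "j > m")
    case True then show ?thesis using err by simp
  next
    case False then have "j = m" using mj by simp
    then show ?thesis using s0 by simp
  qed
  have "norm (z j - z m + (\<Sum>i\<in>{m..<j}. \<alpha> i) *\<^sub>R Fs m)
      \<le> norm (\<Sum>i\<in>{m..<j}. \<alpha> i *\<^sub>R (Fs i - Fs m)) + norm (\<Sum>i\<in>{m..<j}. \<alpha> i *\<^sub>R e i)"
    unfolding eq using norm_triangle_ineq4[of "- (\<Sum>i\<in>{m..<j}. \<alpha> i *\<^sub>R (Fs i - Fs m))" "\<Sum>i\<in>{m..<j}. \<alpha> i *\<^sub>R e i"]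
    by simp
  then show ?thesis using n1 n2 by linarith
qed

lemma window_lemma:
  fixes z Fs e :: "nat \<Rightarrow> 'a::real_normed_vector"
  assumes rec: "\<And>i. z (Suc i) = z i - \<alpha> i *\<^sub>R (Fs i + e i)"
    and alpha: "\<And>i. \<alpha> i > 0"
    and Lip: "\<And>i j. norm (Fs i - Fs j) \<le> K * norm (z i - z j)"
    and K: "K \<ge> 0" and KT: "K * T \<le> 1 / 2"
    and mn: "m < n" and tau: "(\<Sum>i\<in>{m..<n}. \<alpha> i) \<le> T"
    and err: "\<And>j. m < j \<Longrightarrow> j \<le> n \<Longrightarrow> norm (\<Sum>i\<in>{m..<j}. \<alpha> i *\<^sub>R e i) \<le> s"
  shows "norm (z n - z m + (\<Sum>i\<in>{m..<n}. \<alpha> i) *\<^sub>R Fs m) \<le> s + 2 * K * T * (T * norm (Fs m) + s)"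
proof -
  have s0: "s \<ge> 0" using err[OF mn order_refl] norm_ge_zero order_trans by blast
  define A where "A = T * norm (Fs m) + s"
  have T0: "T \<ge> 0" using tau alpha mn
    by (meson order_trans sum_nonneg less_imp_le)
  have A0: "A \<ge> 0" unfolding A_def using T0 s0 by simp
  have taumono: "(\<Sum>i\<in>{m..<j}. \<alpha> i) \<le> T" if "j \<le> n" for j
  proof -
    have "(\<Sum>i\<in>{m..<j}. \<alpha> i) \<le> (\<Sum>i\<in>{m..<n}. \<alpha> i)"
      by (rule sum_mono2) (use that alpha in \<open>auto intro: less_imp_le\<close>)
    then show ?thesis using tau by simp
  qed
  have sumbound: "(\<Sum>i\<in>{m..<j}. \<alpha> i * (K * norm (z i - z m))) \<le> K * (2 * A) * T"
    if jn: "j \<le> n" and IH: "\<And>i. m \<le> i \<Longrightarrow> i < j \<Longrightarrow> norm (z i - z m) \<le> 2 * A" for j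
  proof -
    have "(\<Sum>i\<in>{m..<j}. \<alpha> i * (K * norm (z i - z m))) \<le> (\<Sum>i\<in>{m..<j}. \<alpha> i * (K * (2 * A)))"
    proof (rule sum_mono)
      fix i assume i: "i \<in> {m..<j}"
      have "K * norm (z i - z m) \<le> K * (2 * A)" using IH[of i] i K by (auto intro: mult_left_mono)
      then show "\<alpha> i * (K * norm (z i - z m)) \<le> \<alpha> i * (K * (2 * A))" using alpha[of i] by (simp add: mult_left_mono)
    qed
    also have "\<dots> = K * (2 * A) * (\<Sum>i\<in>{m..<j}. \<alpha> i)" by (simp add: sum_distrib_right[symmetric] mult.commute)
    also have "\<dots> \<le> K * (2 * A) * T" using taumono[OF jn] K A0 by (simp add: mult_left_mono)
    finally show ?thesis .
  qed
  have KAT: "K * (2 * A) * T \<le> A"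
  proof -
    have "K * (2 * A) * T = 2 * A * (K * T)" by (simp add: algebra_simps)
    also have "\<dots> \<le> 2 * A * (1 / 2)" by (rule mult_left_mono) (use KT A0 in auto)
    finally show ?thesis by simp
  qed
  have dbound: "\<forall>j. m \<le> j \<and> j \<le> n \<longrightarrow> norm (z j - z m) \<le> 2 * A"
  proof (intro allI)
    fix j show "m \<le> j \<and> j \<le> n \<longrightarrow> norm (z j - z m) \<le> 2 * A"
    proof (induction j rule: less_induct)
      case (less j)
      show ?case
      proof (intro impI)
        assume mj: "m \<le> j \<and> j \<le> n"
        have IH: "\<And>i. m \<le> i \<Longrightarrow> i < j \<Longrightarrow> norm (z i - z m) \<le> 2 * A" using less mj by auto
        have b: "norm (z j - z m + (\<Sum>i\<in>{m..<j}. \<alpha> i) *\<^sub>R Fs m) \<le> (\<Sum>i\<in>{m..<j}. \<alpha> i * (K * norm (z i - z m))) + s"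
          by (rule window_basic[where z=z and \<alpha>=\<alpha> and Fs=Fs and e=e and K=K, OF rec alpha Lip _ s0]) (use mj err in auto)
        have "norm ((\<Sum>i\<in>{m..<j}. \<alpha> i) *\<^sub>R Fs m) \<le> T * norm (Fs m)"
          using taumono[of j] mj alpha by (simp add: sum_nonneg less_imp_le mult_right_mono)
        moreover have "norm (z j - z m) \<le> norm (z j - z m + (\<Sum>i\<in>{m..<j}. \<alpha> i) *\<^sub>R Fs m) + norm ((\<Sum>i\<in>{m..<j}. \<alpha> i) *\<^sub>R Fs m)"
          by (metis add_diff_cancel norm_triangle_ineq4)
        moreover have "(\<Sum>i\<in>{m..<j}. \<alpha> i * (K * norm (z i - z m))) \<le> K * (2 * A) * T"
          by (rule sumbound) (use mj IH in auto)
        ultimately show "norm (z j - z m) \<le> 2 * A"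
          using b KAT A_def by linarith
      qed
    qed
  qed
  have "norm (z n - z m + (\<Sum>i\<in>{m..<n}. \<alpha> i) *\<^sub>R Fs m) \<le> (\<Sum>i\<in>{m..<n}. \<alpha> i * (K * norm (z i - z m))) + s"
    by (rule window_basic[where z=z and \<alpha>=\<alpha> and Fs=Fs and e=e and K=K, OF rec alpha Lip _ s0]) (use mn err in auto)
  also have "(\<Sum>i\<in>{m..<n}. \<alpha> i * (K * norm (z i - z m))) \<le> K * (2 * A) * T"
    by (rule sumbound) (use dbound in auto)
  finally show ?thesis unfolding A_def by (simp add: algebra_simps)
qed



lemma tau_mono:
  assumes alpha: "\<And>i. \<alpha> i > 0" and "m \<le> n" "n \<le> p"
  shows "tau \<alpha> m n \<le> tau \<alpha> m p"
  unfolding tau_def by (rule sum_mono2) (use assms in \<open>auto intro: less_imp_le\<close>)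

lemma tau_Suc:
  assumes "m \<le> n"
  shows "tau \<alpha> m (Suc n) = tau \<alpha> m n + \<alpha> n"
  unfolding tau_def using assms by simp

lemma tau_unbounded:
  assumes alpha: "\<And>i. \<alpha> i > 0" and ns: "\<not> summable \<alpha>"
  shows "\<exists>N. T < tau \<alpha> m N"
proof (rule ccontr)
  assume "\<not> (\<exists>N. T < tau \<alpha> m N)"
  then have b: "\<And>N. tau \<alpha> m N \<le> T" by (simp add: not_less)
  have "summable \<alpha>"
  proof (rule summableI_nonneg_bounded)
    show "\<And>n. 0 \<le> \<alpha> n" using alpha by (simp add: less_imp_le)
    fix n
    show "(\<Sum>i<n. \<alpha> i) \<le> (\<Sum>i<m. \<alpha> i) + T"
    proof (cases "m \<le> n")
      case True
      have "(\<Sum>i<n. \<alpha> i) = (\<Sum>i\<in>{0..<m}. \<alpha> i) + (\<Sum>i\<in>{m..<n}. \<alpha> i)"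
        using sum.atLeastLessThan_concat[of 0 m n \<alpha>] True by (simp add: atLeast0LessThan)
      then show ?thesis using b[of n] by (simp add: tau_def atLeast0LessThan)
    next
      case False
      have "(\<Sum>i<n. \<alpha> i) \<le> (\<Sum>i<m. \<alpha> i)"
        by (rule sum_mono2) (use False alpha in \<open>auto intro: less_imp_le\<close>)
      moreover have "T \<ge> 0" using b[of m] by (simp add: tau_def)
      ultimately show ?thesis by simp
    qed
  qed
  with ns show False by simp
qed

lemma varpi_props:
  assumes alpha: "\<And>i. \<alpha> i > 0" and ns: "\<not> summable \<alpha>" and am: "\<alpha> m \<le> T"
  shows "m < varpi \<alpha> m T" "tau \<alpha> m (varpi \<alpha> m T) \<le> T" "T < tau \<alpha> m (Suc (varpi \<alpha> m T))"
proof -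
  define S where "S = {n. m \<le> n \<and> tau \<alpha> m n \<le> T}"
  obtain N where N: "T < tau \<alpha> m N" using tau_unbounded[OF alpha ns] by blast
  have "m \<le> N"
  proof (rule ccontr)
    assume "\<not> m \<le> N"
    then have "tau \<alpha> m N = 0" by (simp add: tau_def)
    moreover have "tau \<alpha> m (Suc m) = \<alpha> m" by (simp add: tau_def)
    ultimately show False using N am alpha[of m] by linarith
  qed
  have SN: "S \<subseteq> {..<N}"
  proof
    fix n assume n: "n \<in> S"
    show "n \<in> {..<N}"
    proof (rule ccontr)
      assume "n \<notin> {..<N}"
      then have "N \<le> n" by simp
      then have "tau \<alpha> m N \<le> tau \<alpha> m n" by (rule tau_mono[where \<alpha>=\<alpha>, OF alpha \<open>m \<le> N\<close>])
      then show False using n N unfolding S_def by simp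
    qed
  qed
  then have fin: "finite S" by (rule finite_subset) simp
  have m1: "Suc m \<in> S" using am by (simp add: S_def tau_def)
  then have ne: "S \<noteq> {}" by blast
  define n where "n = Max S"
  have nS: "n \<in> S" unfolding n_def using fin ne by (rule Max_in)
  have mn: "Suc m \<le> n" unfolding n_def using fin m1 by (rule Max_ge)
  have v: "varpi \<alpha> m T = n" unfolding varpi_def S_def[symmetric] n_def
    using cSup_eq_Max[OF fin ne] mn n_def by simp
  show "m < varpi \<alpha> m T" using v mn by simp
  show "tau \<alpha> m (varpi \<alpha> m T) \<le> T" using v nS by (simp add: S_def)
  have "Suc n \<notin> S"
  proof
    assume "Suc n \<in> S"
    then have "Suc n \<le> n" unfolding n_def by (rule Max_ge[OF fin])
    then show False by simp
  qed
  then show "T < tau \<alpha> m (Suc (varpi \<alpha> m T))" using v mn by (simp add: S_def not_le)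
qed

lemma tidx_ge: "k \<le> tidx \<alpha> T k"
proof (induction k)
  case 0 then show ?case by simp
next
  case (Suc k) then show ?case by (simp add: varpi_def)
qed

lemma sagg_ge:
  assumes "tidx \<alpha> T k < j" "j \<le> tidx \<alpha> T (Suc k)"
  shows "norm (\<Sum>i\<in>{tidx \<alpha> T k..<j}. \<alpha> i *\<^sub>R e i) \<le> sagg \<alpha> T e k"
  unfolding sagg_def by (rule Max_ge) (use assms in auto)

lemma sq_sum_le: "((a::real) + b)^2 \<le> 2 * a^2 + 2 * b^2"
proof -
  have "0 \<le> (a - b)^2" by simp
  then show ?thesis unfolding power2_diff power2_sum by linarith
qed

lemma final_arith:
  fixes xi t T M0 K s nF nE D :: real
  assumes xi: "0 < xi" "xi \<le> 1/2" and T: "T > 0" and t: "19 * T / 20 \<le> t" "t \<le> T"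
    and KT: "K * T \<le> xi / 40" and K: "K \<ge> 0" and M0T: "T * M0 \<le> xi / 80" and M0: "M0 \<ge> 0"
    and s: "s \<ge> 0" and nF: "nF \<ge> 0" and nE0: "nE \<ge> 0"
    and nE: "nE \<le> s + 2 * K * T * (T * nF + s)"
    and D: "D \<le> - (xi / 4 - 2 * t * M0) * t * nF ^ 2 + (1 / 2 + 2 * t * M0) * nE ^ 2 / t"
  shows "D \<le> - (xi * T / 5) * nF ^ 2 + 5 / T * s ^ 2"
proof -
  have t0: "t > 0" using t T by linarith
  have tM0: "t * M0 \<le> xi / 80" using M0T t M0 by (meson mult_right_mono order_trans)
  have A: "xi / 4 - 2 * t * M0 \<ge> 9 * xi / 40" using tM0 by linarith
  have B: "1 / 2 + 2 * t * M0 \<le> 41 / 80" using tM0 xi by linarith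
  have B0: "1 / 2 + 2 * t * M0 \<ge> 0" using t0 M0 by simp
    have F1: "(xi / 4 - 2 * t * M0) * t * nF ^ 2 \<ge> (9 * xi / 40) * (19 * T / 20) * nF ^ 2"
  proof -
    have "(9 * xi / 40) * (19 * T / 20) \<le> (xi / 4 - 2 * t * M0) * t"
      by (rule mult_mono) (use A t xi T in auto)
    then show ?thesis by (rule mult_right_mono) simp
  qed
    have KT2: "2 * K * T \<le> xi / 20" using KT by linarith
  have nE2: "nE \<le> (1 + xi / 20) * s + (xi / 20) * (T * nF)"
  proof -
    have "2 * K * T * (T * nF + s) \<le> (xi / 20) * (T * nF + s)"
      by (rule mult_right_mono[OF KT2]) (use T nF s in simp)
    then show ?thesis using nE by (simp add: algebra_simps)
  qed
  have nEsq: "nE ^ 2 \<le> 2 * ((1 + xi / 20) * s) ^ 2 + 2 * ((xi / 20) * (T * nF)) ^ 2"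
  proof -
    have "nE ^ 2 \<le> ((1 + xi / 20) * s + (xi / 20) * (T * nF)) ^ 2"
      by (rule power_mono[OF nE2 nE0])
    also have "\<dots> \<le> 2 * ((1 + xi / 20) * s) ^ 2 + 2 * ((xi / 20) * (T * nF)) ^ 2"
      by (rule sq_sum_le)
    finally show ?thesis .
  qed
  have c1: "((1 + xi / 20) * s) ^ 2 \<le> (41/40)^2 * s^2"
  proof -
    have "(1 + xi / 20) * s \<le> 41/40 * s" using xi s by (intro mult_right_mono) auto
    then have "((1 + xi / 20) * s) ^ 2 \<le> (41/40 * s) ^ 2" by (rule power_mono) (use xi s in simp)
    then show ?thesis unfolding power_mult_distrib .
  qed
  have c2: "((xi / 20) * (T * nF)) ^ 2 \<le> xi / 800 * (T ^ 2 * nF ^ 2)"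
  proof -
    have "((xi / 20) * (T * nF)) ^ 2 = xi * xi / 400 * (T ^ 2 * nF ^ 2)" by (simp add: power2_eq_square)
    also have "\<dots> \<le> xi * (1/2) / 400 * (T ^ 2 * nF ^ 2)"
      by (intro mult_right_mono divide_right_mono mult_left_mono) (use xi in auto)
    finally show ?thesis by simp
  qed
  have nEsq2: "nE ^ 2 \<le> 2 * (41/40)^2 * s^2 + xi / 400 * (T ^ 2 * nF ^ 2)"
    using nEsq c1 c2 by linarith
  have E1: "(1 / 2 + 2 * t * M0) * nE ^ 2 / t \<le> (41 / 80) * (2 * (41/40)^2 * s^2 + xi / 400 * (T ^ 2 * nF ^ 2)) / (19 * T / 20)"
  proof -
    have "(1 / 2 + 2 * t * M0) * nE ^ 2 \<le> (41 / 80) * (2 * (41/40)^2 * s^2 + xi / 400 * (T ^ 2 * nF ^ 2))"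
      by (rule mult_mono[OF B nEsq2]) (use B0 in simp_all)
    moreover have "0 \<le> (41 / 80) * (2 * (41/40)^2 * s^2 + xi / 400 * (T ^ 2 * nF ^ 2))"
      using xi by simp
    ultimately have "(1 / 2 + 2 * t * M0) * nE ^ 2 / t \<le> (41 / 80) * (2 * (41/40)^2 * s^2 + xi / 400 * (T ^ 2 * nF ^ 2)) / t"
      by (intro divide_right_mono) (use t0 in auto)
    also have "\<dots> \<le> (41 / 80) * (2 * (41/40)^2 * s^2 + xi / 400 * (T ^ 2 * nF ^ 2)) / (19 * T / 20)"
      by (rule divide_left_mono) (use \<open>0 \<le> (41 / 80) * (2 * (41/40)^2 * s^2 + xi / 400 * (T ^ 2 * nF ^ 2))\<close> t T in auto)
    finally show ?thesis .
  qed
  define Z where "Z = xi * T * nF ^ 2"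
  define W where "W = s ^ 2 / T"
  have Z0: "Z \<ge> 0" using xi T by (simp add: Z_def)
  have W0: "W \<ge> 0" using T by (simp add: W_def)
  have E2: "(41 / 80) * (2 * (41/40)^2 * s^2 + xi / 400 * (T ^ 2 * nF ^ 2)) / (19 * T / 20)
      = (68921 / 60800) * W + (41 / 30400) * Z"
    using T by (simp add: Z_def W_def field_simps power2_eq_square)
  have F2: "- (xi / 4 - 2 * t * M0) * t * nF ^ 2 \<le> - ((171 / 800) * Z)"
  proof -
    have "(9 * xi / 40) * (19 * T / 20) * nF ^ 2 = (171 / 800) * Z" by (simp add: Z_def)
    moreover have "- (xi / 4 - 2 * t * M0) * t * nF ^ 2 = - ((xi / 4 - 2 * t * M0) * t * nF ^ 2)" by (simp only: mult_minus_left)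
    ultimately show ?thesis using F1 by linarith
  qed
  have G: "- (xi * T / 5) * nF ^ 2 + 5 / T * s ^ 2 = - ((1 / 5) * Z) + 5 * W"
    by (simp add: Z_def W_def)
  have lin: "\<And>D U1 U2 U3 Z W :: real. D \<le> U3 + U1 \<Longrightarrow> U1 \<le> U2 \<Longrightarrow> U2 = (68921 / 60800) * W + (41 / 30400) * Z
     \<Longrightarrow> U3 \<le> - ((171 / 800) * Z) \<Longrightarrow> 0 \<le> Z \<Longrightarrow> 0 \<le> W \<Longrightarrow> D \<le> - ((1 / 5) * Z) + 5 * W"
    by linarith
  show ?thesis unfolding G by (rule lin[OF D E1 E2 F2 Z0 W0])
qed



theorem lemma2p11:
  fixes M :: "'w measure" and Fil :: "nat \<Rightarrow> 'w measure"
    and \<phi> :: "'a::euclidean_space \<Rightarrow> ereal" and f :: "'a \<Rightarrow> real"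
    and lam :: real and \<alpha> :: "nat \<Rightarrow> real" and z0 :: 'a
    and g z x :: "nat \<Rightarrow> 'w \<Rightarrow> 'a"
    and \<sigma> \<beta> :: "nat \<Rightarrow> real"
    and L :: "'w \<Rightarrow> ereal" and \<xi> :: "'w \<Rightarrow> real"
  assumes phi_proper: "proper_fun \<phi>" and phi_convex: "convex_fun \<phi>" and phi_lsc: "lsc_fun \<phi>"
    and f_C1: "\<exists>U. open U \<and> edom \<phi> \<subseteq> U \<and>
                  (\<forall>u\<in>U. (f has_derivative (\<lambda>h. grad f u \<bullet> h)) (at u)) \<and>
                  continuous_on U (grad f)"
    and M_prob: "prob_space M"
    and filt: "filtration (space M) Fil"
    and filt_sub: "\<And>k. sets (Fil k) \<subseteq> sets M"
    and lam_pos: "lam > 0"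
    and alpha_pos: "\<And>k. \<alpha> k > 0"
    and g_meas: "\<And>k. g k \<in> borel_measurable (Fil (Suc k))"
    and z_init: "\<And>\<omega>. z 0 \<omega> = z0"
    and z_step: "\<And>k \<omega>. z (Suc k) \<omega> = z k \<omega> - \<alpha> k *\<^sub>R (g k \<omega> + grad_env lam \<phi> (z k \<omega>))"
    and x_def: "\<And>k \<omega>. x k \<omega> = prox lam \<phi> (z k \<omega>)"
    and L_def: "\<And>\<omega>. L \<omega> = (SUP xb\<in>closure (convex hull (range (\<lambda>k. x k \<omega>))). lip (grad f) xb)"
    and xi_def: "\<And>\<omega>. \<xi> \<omega> = (if L \<omega> < \<infinity>
                         then 1 / (2 + 2 * lam ^ 2 * (real_of_ereal (L \<omega>)) ^ 2) else 0)"
    and A3: "\<not> summable \<alpha>" "\<alpha> \<longlonglongrightarrow> 0"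
    and A4_var: "\<And>k. (\<integral>\<^sup>+ \<omega>. ennreal (norm (g k \<omega> - grad f (x k \<omega>)) ^ 2) \<partial>M) \<le> ennreal (\<sigma> k ^ 2)"
    and A4_sigma: "\<And>k. \<sigma> k \<ge> 0"
    and A4_beta_pos: "\<And>k. \<beta> k > 0"
    and A4_beta_mono: "\<exists>K. \<forall>k\<ge>K. \<beta> k \<le> \<beta> (Suc k)"
    and A4_sum: "summable (\<lambda>k. \<alpha> k ^ 2 * \<beta> k ^ 2 * \<sigma> k ^ 2)"
  shows "\<forall>\<omega>\<in>space M. L \<omega> < \<infinity> \<longrightarrow>
           (\<exists>Tbar>0. \<forall>T. 0 < T \<and> T \<le> Tbar \<longrightarrow>
              (\<exists>K0. \<forall>k\<ge>K0.
                 Hmerit f lam \<phi> (\<xi> \<omega>) (z (tidx \<alpha> T (Suc k)) \<omega>)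
                 - Hmerit f lam \<phi> (\<xi> \<omega>) (z (tidx \<alpha> T k) \<omega>)
                 \<le> ereal (- (\<xi> \<omega> * T / 5) * norm (Fnor f lam \<phi> (z (tidx \<alpha> T k) \<omega>)) ^ 2
                          + 5 / T * (sagg \<alpha> T (\<lambda>i. g i \<omega> - grad f (x i \<omega>)) k) ^ 2)))"
proof (intro ballI impI)
  fix \<omega> assume "\<omega> \<in> space M" and Lfin: "L \<omega> < \<infinity>"
  obtain U where U: "open U" "edom \<phi> \<subseteq> U" "\<forall>u\<in>U. (f has_derivative (\<lambda>h. grad f u \<bullet> h)) (at u)"
    using f_C1 by blast
  define Lr where "Lr = \<bar>real_of_ereal (L \<omega>)\<bar>"
  have Lr0: "Lr \<ge> 0" unfolding Lr_def by (rule abs_ge_zero)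
  have LleLr: "L \<omega> \<le> ereal Lr"
  proof (cases "L \<omega>")
    case (real r) then show ?thesis by (simp add: Lr_def)
  next
    case PInf then show ?thesis using Lfin by simp
  next
    case MInf then show ?thesis by simp
  qed
  define xv where "xv = \<xi> \<omega>"
  have Lr2: "Lr^2 = (real_of_ereal (L \<omega>))^2" unfolding Lr_def by (rule power2_abs)
  have xv: "xv = 1 / (2 + 2 * lam^2 * Lr^2)" unfolding Lr2 xv_def using xi_def[of \<omega>] Lfin by simp
  have den: "2 + 2 * lam^2 * Lr^2 > 0" by (simp add: add_pos_nonneg)
  have xv0: "xv > 0" using den xv by simp
  have xv1: "xv \<le> 1 / 2" using den unfolding xv by (simp add: field_simps)
  define C where "C = convex hull (range (\<lambda>k. x k \<omega>))"
  have xfin: "\<exists>c. \<phi> (x k \<omega>) = ereal c" for k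
    using prox_props(1)[OF phi_proper phi_convex phi_lsc lam_pos] x_def by simp
  have xdom: "x k \<omega> \<in> edom \<phi>" for k using xfin[of k] by (auto simp: edom_def)
  have Cconv: "convex C" unfolding C_def by simp
  have Cdom: "C \<subseteq> edom \<phi>" unfolding C_def
    by (rule hull_minimal) (use xdom edom_convex[OF phi_convex] in auto)
  have CU: "C \<subseteq> U" using Cdom U(2) by blast
  have xC: "x k \<omega> \<in> C" for k unfolding C_def by (rule hull_inc) simp
  have lipC: "\<forall>c\<in>C. lip (grad f) c \<le> ereal Lr"
  proof
    fix c assume "c \<in> C"
    then have "c \<in> closure C" using closure_subset by blast
    then have "lip (grad f) c \<le> L \<omega>" unfolding L_def[of \<omega>] C_def by (rule SUP_upper)
    then show "lip (grad f) c \<le> ereal Lr" using LleLr by (rule order_trans)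
  qed
  have gLip: "\<forall>p\<in>C. \<forall>q\<in>C. norm (grad f p - grad f q) \<le> Lr * norm (p - q)"
    using segment_lip[OF Cconv _ _ lipC] by blast
  define Fk where "Fk k = Fnor f lam \<phi> (z k \<omega>)" for k
  define ek where "ek k = g k \<omega> - grad f (x k \<omega>)" for k
  have rec: "z (Suc i) \<omega> = z i \<omega> - \<alpha> i *\<^sub>R (Fk i + ek i)" for i
    using z_step[of i \<omega>] by (simp add: Fk_def ek_def Fnor_def grad_env_def x_def algebra_simps)
  have firm: "inner ((z i \<omega> - x i \<omega>) - (z j \<omega> - x j \<omega>)) (x i \<omega> - x j \<omega>) \<ge> 0" for i j
    using prox_firm[OF phi_proper phi_convex phi_lsc lam_pos, of "z i \<omega>" "z j \<omega>"] by (simp add: x_def)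
  have nonexp: "norm (x i \<omega> - x j \<omega>) \<le> norm (z i \<omega> - z j \<omega>) \<and>
      norm ((z i \<omega> - x i \<omega>) - (z j \<omega> - x j \<omega>)) \<le> norm (z i \<omega> - z j \<omega>)" for i j
  proof -
    define p where "p = x i \<omega> - x j \<omega>"
    define q where "q = (z i \<omega> - x i \<omega>) - (z j \<omega> - x j \<omega>)"
    have pq: "p + q = z i \<omega> - z j \<omega>" by (simp add: p_def q_def)
    have "inner q p \<ge> 0" using firm[of i j] unfolding p_def q_def .
    then have iq: "inner p q \<ge> 0" by (simp only: inner_commute[of p q])
    have sq: "norm (p + q)^2 = norm p^2 + norm q^2 + 2 * inner p q"
      by (simp add: power2_norm_eq_inner inner_add_left inner_add_right inner_commute[of q p])
    have h1: "norm p^2 \<le> norm (p + q)^2" and h2: "norm q^2 \<le> norm (p + q)^2" using sq iq by simp_all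
    have "norm p \<le> norm (p + q)" by (rule power2_le_imp_le[OF h1]) simp
    moreover have "norm q \<le> norm (p + q)" by (rule power2_le_imp_le[OF h2]) simp
    ultimately have "norm p \<le> norm (p + q)" "norm q \<le> norm (p + q)" by simp_all
    then have c: "norm p \<le> norm (z i \<omega> - z j \<omega>)" "norm q \<le> norm (z i \<omega> - z j \<omega>)"
      unfolding pq by simp_all
    show ?thesis using c unfolding p_def q_def by blast
  qed
  define K where "K = Lr + 1 / lam"
  have K0: "K > 0" unfolding K_def using Lr0 lam_pos by (simp add: add_nonneg_pos)
  have FLip: "norm (Fk i - Fk j) \<le> K * norm (z i \<omega> - z j \<omega>)" for i j
  proof -
    have "Fk i - Fk j = (grad f (x i \<omega>) - grad f (x j \<omega>)) + (1 / lam) *\<^sub>R ((z i \<omega> - x i \<omega>) - (z j \<omega> - x j \<omega>))"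
      by (simp add: Fk_def Fnor_def x_def algebra_simps)
    then have "norm (Fk i - Fk j) \<le> norm (grad f (x i \<omega>) - grad f (x j \<omega>)) + (1 / lam) * norm ((z i \<omega> - x i \<omega>) - (z j \<omega> - x j \<omega>))"
      using norm_triangle_ineq[of "grad f (x i \<omega>) - grad f (x j \<omega>)" "(1 / lam) *\<^sub>R ((z i \<omega> - x i \<omega>) - (z j \<omega> - x j \<omega>))"]
        lam_pos by simp
    also have "\<dots> \<le> Lr * norm (z i \<omega> - z j \<omega>) + (1 / lam) * norm (z i \<omega> - z j \<omega>)"
    proof (rule add_mono)
      have "norm (grad f (x i \<omega>) - grad f (x j \<omega>)) \<le> Lr * norm (x i \<omega> - x j \<omega>)" using gLip xC by blast
      also have "\<dots> \<le> Lr * norm (z i \<omega> - z j \<omega>)" using nonexp[of i j] Lr0 by (simp add: mult_left_mono)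
      finally show "norm (grad f (x i \<omega>) - grad f (x j \<omega>)) \<le> Lr * norm (z i \<omega> - z j \<omega>)" .
      show "(1 / lam) * norm ((z i \<omega> - x i \<omega>) - (z j \<omega> - x j \<omega>)) \<le> (1 / lam) * norm (z i \<omega> - z j \<omega>)"
        using nonexp[of i j] lam_pos by (intro mult_left_mono) auto
    qed
    also have "\<dots> = K * norm (z i \<omega> - z j \<omega>)" by (simp add: K_def distrib_right)
    finally show ?thesis .
  qed
  define M0 where "M0 = Lr / 2 + lam * Lr^2 / 2 + 1 / lam"
  have M0pos: "M0 > 0" unfolding M0_def using Lr0 lam_pos by (simp add: add_nonneg_pos)
  define Tbar where "Tbar = min (xv / (40 * K)) (xv / (80 * M0))"
  have Tbar0: "Tbar > 0" unfolding Tbar_def using xv0 K0 M0pos by simp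
  show "\<exists>Tbar>0. \<forall>T. 0 < T \<and> T \<le> Tbar \<longrightarrow>
              (\<exists>K0. \<forall>k\<ge>K0.
                 Hmerit f lam \<phi> (\<xi> \<omega>) (z (tidx \<alpha> T (Suc k)) \<omega>)
                 - Hmerit f lam \<phi> (\<xi> \<omega>) (z (tidx \<alpha> T k) \<omega>)
                 \<le> ereal (- (\<xi> \<omega> * T / 5) * norm (Fnor f lam \<phi> (z (tidx \<alpha> T k) \<omega>)) ^ 2
                          + 5 / T * (sagg \<alpha> T (\<lambda>i. g i \<omega> - grad f (x i \<omega>)) k) ^ 2))"
  proof (intro exI[of _ Tbar] conjI allI impI)
    show "Tbar > 0" by (rule Tbar0)
    fix T assume T: "0 < T \<and> T \<le> Tbar"
    have KT: "K * T \<le> xv / 40"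
    proof -
      have "T \<le> xv / (40 * K)" using T by (simp add: Tbar_def)
      then show ?thesis using K0 by (simp add: field_simps)
    qed
    have M0T: "T * M0 \<le> xv / 80"
    proof -
      have "T \<le> xv / (80 * M0)" using T by (simp add: Tbar_def)
      then show ?thesis using M0pos by (simp add: field_simps)
    qed
    have KT2: "K * T \<le> 1 / 2" using KT xv1 by linarith
    have "eventually (\<lambda>i. \<alpha> i < T / 20) sequentially"
      using order_tendstoD(2)[OF A3(2), of "T / 20"] T by simp
    then obtain N0 where N0: "\<And>i. i \<ge> N0 \<Longrightarrow> \<alpha> i < T / 20"
      unfolding eventually_sequentially by blast
    show "\<exists>K0. \<forall>k\<ge>K0.
                 Hmerit f lam \<phi> (\<xi> \<omega>) (z (tidx \<alpha> T (Suc k)) \<omega>)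
                 - Hmerit f lam \<phi> (\<xi> \<omega>) (z (tidx \<alpha> T k) \<omega>)
                 \<le> ereal (- (\<xi> \<omega> * T / 5) * norm (Fnor f lam \<phi> (z (tidx \<alpha> T k) \<omega>)) ^ 2
                          + 5 / T * (sagg \<alpha> T (\<lambda>i. g i \<omega> - grad f (x i \<omega>)) k) ^ 2)"
    proof (intro exI[of _ N0] allI impI)
      fix k assume kN: "N0 \<le> k"
      define m where "m = tidx \<alpha> T k"
      define n where "n = tidx \<alpha> T (Suc k)"
      have nv: "n = varpi \<alpha> m T" by (simp add: n_def m_def)
      have mk: "k \<le> m" unfolding m_def by (rule tidx_ge)
      have am: "\<alpha> m \<le> T" using N0[of m] mk kN T by simp
      have mn: "m < n" and taun: "tau \<alpha> m n \<le> T" and taun1: "T < tau \<alpha> m (Suc n)"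
        using varpi_props[OF alpha_pos A3(1) am] nv by simp_all
      have an: "\<alpha> n < T / 20" using N0[of n] mn mk kN by simp
      define t where "t = tau \<alpha> m n"
      have tS: "t = (\<Sum>i\<in>{m..<n}. \<alpha> i)" by (simp add: t_def tau_def)
      have t1: "t \<le> T" using taun by (simp add: t_def)
      have t2: "19 * T / 20 \<le> t" using taun1 tau_Suc[of m n \<alpha>] mn an by (simp add: t_def)
      have t0: "t > 0" using t2 T by linarith
      define s where "s = sagg \<alpha> T (\<lambda>i. g i \<omega> - grad f (x i \<omega>)) k"
      have err: "norm (\<Sum>i\<in>{m..<j}. \<alpha> i *\<^sub>R ek i) \<le> s" if "m < j" "j \<le> n" for j
        using sagg_ge[of \<alpha> T k j "\<lambda>i. g i \<omega> - grad f (x i \<omega>)"] that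
        by (simp add: m_def n_def s_def ek_def)
      have s0: "s \<ge> 0" using err[OF mn order_refl] norm_ge_zero order_trans by blast
      have win: "norm (z n \<omega> - z m \<omega> + t *\<^sub>R Fk m) \<le> s + 2 * K * T * (T * norm (Fk m) + s)"
        unfolding tS
        by (rule window_lemma[where z="\<lambda>i. z i \<omega>" and Fs=Fk and e=ek and \<alpha>=\<alpha> and K=K,
              OF rec alpha_pos FLip _ KT2 mn _ err]) (use K0 taun tau_def in auto)
      define E where "E = - (z n \<omega> - z m \<omega>) - t *\<^sub>R Fk m"
      have nE: "norm E = norm (z n \<omega> - z m \<omega> + t *\<^sub>R Fk m)"
        by (metis E_def minus_add_distrib norm_minus_cancel diff_conv_add_uminus)
      define a where "a = x n \<omega> - x m \<omega>"
      define b where "b = (z n \<omega> - x n \<omega>) - (z m \<omega> - x m \<omega>)"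
      define G where "G = grad f (x n \<omega>) - grad f (x m \<omega>)"
      obtain cm where cm: "\<phi> (x m \<omega>) = ereal cm" using xfin by blast
      obtain cn where cn: "\<phi> (x n \<omega>) = ereal cn" using xfin by blast
      define Dp where "Dp = (f (x n \<omega>) + cn) - (f (x m \<omega>) + cm)"
      have dl: "a + b = - (t *\<^sub>R Fk m) - E" by (simp add: a_def b_def E_def)
      have "inner b a \<ge> 0" using firm[of n m] unfolding a_def b_def .
      then have Pab: "inner a b \<ge> 0" by (simp only: inner_commute[of a b])
      have Gb: "norm G \<le> Lr * norm a" using gLip xC by (simp add: G_def a_def)
      have desc: "f (x n \<omega>) \<le> f (x m \<omega>) + grad f (x m \<omega>) \<bullet> a + Lr / 2 * norm a ^ 2"
        unfolding a_def by (rule descent_lemma[OF Cconv xC xC CU U(3) gLip])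
      have sub: "cn + inner (z n \<omega> - x n \<omega>) (x m \<omega> - x n \<omega>) / lam \<le> cm"
        using prox_props(2)[OF phi_proper phi_convex phi_lsc lam_pos, of "z n \<omega>" "x m \<omega>"] cm cn
        by (simp add: x_def)
      have ieq: "inner (Fk m) a + inner b a / lam = grad f (x m \<omega>) \<bullet> a - inner (z n \<omega> - x n \<omega>) (x m \<omega> - x n \<omega>) / lam"
      proof -
        have "inner (Fk m) a = grad f (x m \<omega>) \<bullet> a + inner (z m \<omega> - x m \<omega>) a / lam"
          by (simp add: Fk_def Fnor_def x_def inner_add_left)
        moreover have "inner b a = inner (z n \<omega> - x n \<omega>) a - inner (z m \<omega> - x m \<omega>) a"
          by (simp add: b_def inner_diff_left)
        moreover have "inner (z n \<omega> - x n \<omega>) (x m \<omega> - x n \<omega>) = - inner (z n \<omega> - x n \<omega>) a"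
          by (metis a_def inner_minus_right minus_diff_eq)
        ultimately show ?thesis by (simp add: diff_divide_distrib)
      qed
      have Dpb: "Dp \<le> inner (Fk m) a + inner b a / lam + Lr / 2 * norm a ^ 2"
        using desc sub ieq unfolding Dp_def by linarith
      have os: "Dp + xv * lam / 2 * (norm (Fk m + G + (1 / lam) *\<^sub>R b) ^ 2 - norm (Fk m) ^ 2)
         \<le> - (xv / 4 - 2 * t * M0) * t * norm (Fk m) ^ 2 + (1 / 2 + 2 * t * M0) * norm E ^ 2 / t"
        unfolding M0_def by (rule one_step[OF t0 lam_pos Lr0 xv dl Pab Gb Dpb])
      have Fn: "Fk m + G + (1 / lam) *\<^sub>R b = Fk n"
        by (simp add: Fk_def Fnor_def G_def b_def x_def algebra_simps)
      have fa: "Dp + xv * lam / 2 * (norm (Fk n) ^ 2 - norm (Fk m) ^ 2)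
          \<le> - (xv * T / 5) * norm (Fk m) ^ 2 + 5 / T * s ^ 2"
        by (rule final_arith[OF xv0 xv1 _ t2 t1 KT _ M0T _ s0 norm_ge_zero norm_ge_zero _ os[unfolded Fn]])
           (use T K0 M0pos win nE in auto)
      have Hn: "Hmerit f lam \<phi> xv (z n \<omega>) = ereal (f (x n \<omega>) + cn + xv * lam / 2 * norm (Fk n) ^ 2)"
        using cn by (simp add: Hmerit_def Fk_def x_def)
      have Hm: "Hmerit f lam \<phi> xv (z m \<omega>) = ereal (f (x m \<omega>) + cm + xv * lam / 2 * norm (Fk m) ^ 2)"
        using cm by (simp add: Hmerit_def Fk_def x_def)
      have "Hmerit f lam \<phi> xv (z n \<omega>) - Hmerit f lam \<phi> xv (z m \<omega>)
          = ereal (Dp + xv * lam / 2 * (norm (Fk n) ^ 2 - norm (Fk m) ^ 2))"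
        unfolding Hn Hm Dp_def by (simp add: algebra_simps)
      also have "\<dots> \<le> ereal (- (xv * T / 5) * norm (Fk m) ^ 2 + 5 / T * s ^ 2)"
        using fa by simp
      finally show "Hmerit f lam \<phi> (\<xi> \<omega>) (z (tidx \<alpha> T (Suc k)) \<omega>)
                 - Hmerit f lam \<phi> (\<xi> \<omega>) (z (tidx \<alpha> T k) \<omega>)
                 \<le> ereal (- (\<xi> \<omega> * T / 5) * norm (Fnor f lam \<phi> (z (tidx \<alpha> T k) \<omega>)) ^ 2
                          + 5 / T * (sagg \<alpha> T (\<lambda>i. g i \<omega> - grad f (x i \<omega>)) k) ^ 2)"
        by (simp add: xv_def m_def n_def s_def Fk_def)
    qed
  qed
qed

end
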